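(* Let $\varepsilon,\delta\in[0,1]$ and let $X=2^\mathbb{N}$ (with the uniform product measure) or $X=[0,1]$ (with Lebesgue measure). Then the following are equivalent: (i) $\mathsf{P}_{>\varepsilon}\mathsf{C}_{X}\le_W\mathsf{P}_{>\delta}\mathsf{C}_{X}$; (ii) $\mathsf{P}_{>\varepsilon}\mathsf{C}_{X}\le_{sW}\mathsf{P}_{>\delta}\mathsf{C}_{X}$; (iii) $\varepsilon\ge\delta$.
   Context: A represented space is a pair $(X,\delta_X)$ with $\delta_X:\subseteq\mathbb{N}^\mathbb{N}\to X$ a partial surjection; $[0,1]$ carries its Cauchy representation. A realizer of $f:\subseteq X\rightrightarrows Y$ is a partial $F$ with $\delta_Y F(p)\in f(\delta_X(p))$ for all $p\in\mathrm{dom}(f\circ\delta_X)$. $f\le_W g$ if there are computable partial $H,K:\subseteq\mathbb{N}^\mathbb{N}\to\mathbb{N}^\mathbb{N}$ such that $p\mapsto H\langle p,GK(p)\rangle$ realizes $f$ for every realizer $G$ of $g$; $f\le_{sW}g$ if instead $HGK$ realizes $f$ for every realizer $G$ of $g$. $\mathcal{A}_-(X)$ denotes the closed subsets of $X$ represented by negative information (a name of $A$ enumerates basic open sets whose union is $X\setminus A$). For a Borel measure $\mu$ on $X$ and $\varepsilon\in\mathbb R$, $\mathsf{P}_{>\varepsilon}\mathsf{C}_X:\subseteq\mathcal{A}_-(X)\rightrightarrows X$, $A\mapsto A$, is defined on all closed $A$ with $\mu(A)>\varepsilon$ (nonempty). The uniform measure on $2^\mathbb N$ satisfies $\mu(w2^\mathbb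 N)=2^{-|w|}$. *)

theory Defs
  imports "HOL-Probability.Probability" "HOL-Library.Nat_Bijection"
begin

datatype recf = Zer | Suc_f | Proj nat | Comp recf "recf list" | Prim recf recf | Mini recf

inductive reval :: "recf \<Rightarrow> nat list \<Rightarrow> nat \<Rightarrow> bool" where
  "reval Zer xs 0"
| "reval Suc_f (x # xs) (Suc x)"
| "i < length xs \<Longrightarrow> reval (Proj i) xs (xs ! i)"
| "list_all2 (\<lambda>g y. reval g xs y) gs ys \<Longrightarrow> reval f ys z \<Longrightarrow> reval (Comp f gs) xs z"
| "reval f xs z \<Longrightarrow> reval (Prim f g) (0 # xs) z"
| "reval (Prim f g) (n # xs) y \<Longrightarrow> reval g (n # y # xs) z \<Longrightarrow> reval (Prim f g) (Suc n # xs) z"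
| "reval f (n # xs) 0 \<Longrightarrow> (\<forall>m<n. \<exists>y. reval f (m # xs) (Suc y)) \<Longrightarrow> reval (Mini f) xs n"

type_synonym baire = "nat \<Rightarrow> nat"
type_synonym pfun = "baire \<Rightarrow> baire option"

definition prefix_code :: "baire \<Rightarrow> nat \<Rightarrow> nat" where
  "prefix_code p k = list_encode (map p [0..<k])"

text \<open>F :\<subseteq> N^N -> N^N is computable iff some Type-2 machine (here: a partial
recursive e, which on a coded finite prefix of the input and an index n may output the
n-th output symbol) computes F(p) for every p in dom F.\<close>
definition computable :: "pfun \<Rightarrow> bool" where
  "computable F \<longleftrightarrow> (\<exists>e. \<forall>p q. F p = Some q \<longrightarrow>
      (\<forall>n. \<exists>k. reval e [prefix_code p k, n] (q n)) \<and>
      (\<forall>k n m. reval e [prefix_code p k, n] m \<longrightarrow> m = q n))"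

definition bpair :: "baire \<Rightarrow> baire \<Rightarrow> baire" where
  "bpair p q = (\<lambda>n. if even n then p (n div 2) else q (n div 2))"

text \<open>A (partial multi-valued) problem f :\<subseteq> X \<rightrightarrows> Y together with the
representations of X and Y (given as single-valued naming relations), its domain and its
values.\<close>
record ('a, 'b) problem =
  rep_in :: "baire \<Rightarrow> 'a \<Rightarrow> bool"
  rep_out :: "baire \<Rightarrow> 'b \<Rightarrow> bool"
  pdom :: "'a set"
  pval :: "'a \<Rightarrow> 'b set"

definition realizes :: "('a, 'b) problem \<Rightarrow> pfun \<Rightarrow> bool" where
  "realizes f F \<longleftrightarrow> (\<forall>p x. rep_in f p x \<and> x \<in> pdom f \<longrightarrow>
      (\<exists>q y. F p = Some q \<and> rep_out f q y \<and> y \<in> pval f x))"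

definition weihrauch_le :: "('a, 'b) problem \<Rightarrow> ('c, 'd) problem \<Rightarrow> bool" where
  "weihrauch_le f g \<longleftrightarrow> (\<exists>H K. computable H \<and> computable K \<and>
      (\<forall>G. realizes g G \<longrightarrow>
         realizes f (\<lambda>p. Option.bind (K p) (\<lambda>r. Option.bind (G r) (\<lambda>s. H (bpair p s))))))"

definition strong_weihrauch_le :: "('a, 'b) problem \<Rightarrow> ('c, 'd) problem \<Rightarrow> bool" where
  "strong_weihrauch_le f g \<longleftrightarrow> (\<exists>H K. computable H \<and> computable K \<and>
      (\<forall>G. realizes g G \<longrightarrow>
         realizes f (\<lambda>p. Option.bind (K p) (\<lambda>r. Option.bind (G r) H))))"

text \<open>Given the point set X and a numbering B of basic open sets (relative to X),
a name p of a closed set A enumerates basic open sets (p n = 0: nothing;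
p n = Suc k: basic set B k) whose union is X - A.\<close>
definition neg_closed_rep :: "'x set \<Rightarrow> (nat \<Rightarrow> 'x set) \<Rightarrow> baire \<Rightarrow> 'x set \<Rightarrow> bool" where
  "neg_closed_rep X B p A \<longleftrightarrow> A = X - (\<Union>n\<in>{n. p n \<noteq> 0}. B (p n - 1))"

definition PC :: "'x set \<Rightarrow> (nat \<Rightarrow> 'x set) \<Rightarrow> (baire \<Rightarrow> 'x \<Rightarrow> bool) \<Rightarrow> 'x measure \<Rightarrow> real
    \<Rightarrow> ('x set, 'x) problem" where
  "PC X B \<delta> \<mu> \<epsilon> = \<lparr> rep_in = neg_closed_rep X B, rep_out = \<delta>,
      pdom = {A. measure \<mu> A > \<epsilon>}, pval = (\<lambda>A. A) \<rparr>"

definition cantor_rep :: "baire \<Rightarrow> (nat \<Rightarrow> bool) \<Rightarrow> bool" where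
  "cantor_rep p x \<longleftrightarrow> (\<forall>n. p n < 2) \<and> x = (\<lambda>n. p n = 1)"

definition cantor_word :: "nat \<Rightarrow> bool list" where
  "cantor_word k = map (\<lambda>n. n \<noteq> 0) (list_decode k)"

definition cantor_basic :: "nat \<Rightarrow> (nat \<Rightarrow> bool) set" where
  "cantor_basic k = {x. \<forall>i < length (cantor_word k). x i = cantor_word k ! i}"

definition cantor_measure :: "(nat \<Rightarrow> bool) measure" where
  "cantor_measure = PiM UNIV (\<lambda>_::nat. measure_pmf (bernoulli_pmf (1/2)))"

definition PC_cantor :: "real \<Rightarrow> ((nat \<Rightarrow> bool) set, nat \<Rightarrow> bool) problem" where
  "PC_cantor \<epsilon> = PC UNIV cantor_basic cantor_rep cantor_measure \<epsilon>"

definition rat_num :: "nat \<Rightarrow> real" where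
  "rat_num k = real_of_int (int_decode (fst (prod_decode k))) / real (Suc (snd (prod_decode k)))"

definition unit_rep :: "baire \<Rightarrow> real \<Rightarrow> bool" where
  "unit_rep p x \<longleftrightarrow> x \<in> {0..1} \<and> (\<forall>n. \<bar>rat_num (p n) - x\<bar> \<le> (1/2) ^ n)"

definition unit_basic :: "nat \<Rightarrow> real set" where
  "unit_basic k = {x \<in> {0..1}. rat_num (fst (prod_decode k)) < x \<and> x < rat_num (snd (prod_decode k))}"

definition PC_unit :: "real \<Rightarrow> (real set, real) problem" where
  "PC_unit \<epsilon> = PC {0..1} unit_basic unit_rep lborel \<epsilon>"

end

theory Submission
  imports Defs
begin


definition fn :: "recf \<Rightarrow> nat \<Rightarrow> (nat list \<Rightarrow> nat) \<Rightarrow> bool" where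
  "fn P k F \<longleftrightarrow> (\<forall>xs y. length xs = k \<longrightarrow> (reval P xs y \<longleftrightarrow> y = F xs))"

lemma reval_Zer_iff: "reval Zer xs y \<longleftrightarrow> y = 0"
  by (auto elim: reval.cases simp: reval.intros(1))

lemma reval_Suc_iff: "reval Suc_f xs y \<longleftrightarrow> (xs \<noteq> [] \<and> y = Suc (hd xs))"
  by (auto elim: reval.cases simp: neq_Nil_conv reval.intros(2))

lemma reval_Proj_iff: "reval (Proj i) xs y \<longleftrightarrow> (i < length xs \<and> y = xs ! i)"
  by (auto elim: reval.cases simp: reval.intros(3))

lemma reval_Comp_iff: "reval (Comp f gs) xs z \<longleftrightarrow> (\<exists>ys. list_all2 (\<lambda>g y. reval g xs y) gs ys \<and> reval f ys z)"
  by (auto elim: reval.cases intro: reval.intros(4))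

lemma reval_Mini_iff: "reval (Mini f) xs n \<longleftrightarrow> (reval f (n # xs) 0 \<and> (\<forall>m<n. \<exists>y. reval f (m # xs) (Suc y)))"
  by (auto elim: reval.cases intro: reval.intros(7))

lemma fn_Zer: "fn Zer k (\<lambda>_. 0)" by (simp add: fn_def reval_Zer_iff)
lemma fn_Suc: "fn Suc_f (Suc k) (\<lambda>xs. Suc (hd xs))" by (auto simp add: fn_def reval_Suc_iff)
lemma fn_Proj: "i < k \<Longrightarrow> fn (Proj i) k (\<lambda>xs. xs ! i)" by (auto simp add: fn_def reval_Proj_iff)

lemma list_all2_fn:
  assumes "list_all2 (\<lambda>g G. fn g k G) gs Gs" "length xs = k"
  shows "list_all2 (\<lambda>g y. reval g xs y) gs ys \<longleftrightarrow> ys = map (\<lambda>G. G xs) Gs"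
  using assms(1)
proof (induction gs Gs arbitrary: ys rule: list_all2_induct)
  case Nil
  then show ?case by simp
next
  case (Cons g gs G Gs)
  show ?case
    using Cons assms(2) by (cases ys) (auto simp: fn_def)
qed

lemma fn_Comp:
  assumes "fn f m F" "list_all2 (\<lambda>g G. fn g k G) gs Gs" "length gs = m"
  shows "fn (Comp f gs) k (\<lambda>xs. F (map (\<lambda>G. G xs) Gs))"
  using assms list_all2_fn[OF assms(2)] list_all2_lengthD[OF assms(2)]
  by (auto simp: fn_def reval_Comp_iff)

lemma reval_Prim0_iff: "reval (Prim f g) (0 # xs) z \<longleftrightarrow> reval f xs z"
  apply (rule iffI)
   apply (erule reval.cases; simp)
  apply (erule reval.intros(5))
  done

lemma reval_PrimS_iff: "reval (Prim f g) (Suc n # xs) z \<longleftrightarrow> (\<exists>y. reval (Prim f g) (n # xs) y \<and> reval g (n # y # xs) z)"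
  apply (rule iffI)
   apply (erule reval.cases; auto)
  apply (auto intro: reval.intros(6))
  done

lemma fn_Prim:
  assumes f: "fn f k F" and g: "fn g (Suc (Suc k)) G"
  shows "fn (Prim f g) (Suc k) (\<lambda>xs. rec_nat (F (tl xs)) (\<lambda>n y. G (n # y # tl xs)) (hd xs))"
proof -
  have *: "reval (Prim f g) (n # ys) y \<longleftrightarrow> y = rec_nat (F ys) (\<lambda>n y. G (n # y # ys)) n"
    if "length ys = k" for n ys y
  proof (induction n arbitrary: y)
    case 0
    show ?case
      using f that by (simp add: fn_def reval_Prim0_iff)
  next
    case (Suc n)
    show ?case
      using Suc g that by (simp add: fn_def reval_PrimS_iff)
  qed
  show ?thesis
    unfolding fn_def
  proof (intro allI impI)
    fix xs :: "nat list" and y assume "length xs = Suc k"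
    then obtain n ys where "xs = n # ys" "length ys = k" by (cases xs) auto
    then show "reval (Prim f g) xs y = (y = rec_nat (F (tl xs)) (\<lambda>n y. G (n # y # tl xs)) (hd xs))"
      using * by simp
  qed
qed

lemma fn_Mini:
  assumes f: "fn f (Suc k) F" and ex: "\<exists>n. F (n # xs) = 0" and "length xs = k"
  shows "reval (Mini f) xs y \<longleftrightarrow> y = (LEAST n. F (n # xs) = 0)"
proof -
  have e: "reval f (m # xs) z \<longleftrightarrow> z = F (m # xs)" for m z using f assms(3) by (simp add: fn_def)
  have L: "F ((LEAST n. F (n # xs) = 0) # xs) = 0" using ex by (rule LeastI_ex)
  have L2: "m < (LEAST n. F (n # xs) = 0) \<Longrightarrow> F (m # xs) \<noteq> 0" for m using not_less_Least by blast
  show ?thesis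
    unfolding reval_Mini_iff e
  proof
    assume A: "0 = F (y # xs) \<and> (\<forall>m<y. \<exists>ya. Suc ya = F (m # xs))"
    show "y = (LEAST n. F (n # xs) = 0)"
    proof (rule antisym)
      show "y \<le> (LEAST n. F (n # xs) = 0)"
        using A L by (metis Zero_not_Suc not_le)
      show "(LEAST n. F (n # xs) = 0) \<le> y" using A by (simp add: Least_le)
    qed
  next
    assume "y = (LEAST n. F (n # xs) = 0)"
    then show "0 = F (y # xs) \<and> (\<forall>m<y. \<exists>ya. Suc ya = F (m # xs))"
      using L L2 by (metis not0_implies_Suc)
  qed
qed


lemma fn_cong: "fn P k F \<Longrightarrow> (\<And>xs. length xs = k \<Longrightarrow> F xs = F' xs) \<Longrightarrow> fn P k F'"
  by (simp add: fn_def)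

lemma fn_Comp1: "fn f (Suc 0) F \<Longrightarrow> fn g k G \<Longrightarrow> fn (Comp f [g]) k (\<lambda>xs. F [G xs])"
  using fn_Comp[where gs="[g]" and Gs="[G]" and f=f and F=F and k=k] by simp

lemma fn_Comp2: "fn f (Suc (Suc 0)) F \<Longrightarrow> fn g k G \<Longrightarrow> fn h k H \<Longrightarrow> fn (Comp f [g, h]) k (\<lambda>xs. F [G xs, H xs])"
  using fn_Comp[where gs="[g,h]" and Gs="[G,H]" and f=f and F=F and k=k] by simp

lemma rn_sub: "rec_nat x (\<lambda>n y. y - Suc 0) a = x - a" by (induction a) auto
lemma rn_add: "rec_nat x (\<lambda>n. Suc) a = a + x" by (induction a) auto
lemma rn_tri: "rec_nat 0 (\<lambda>n y. Suc (n + y)) a = triangle a" by (induction a) auto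

definition "PRED = Prim Zer (Proj 0)"
lemma fn_PRED: "fn PRED (Suc 0) (\<lambda>xs. hd xs - 1)"
  unfolding PRED_def
  apply (rule fn_cong[OF fn_Prim[OF fn_Zer fn_Proj]])
   apply simp
  apply (case_tac xs; simp)
  apply (case_tac a; simp)
  done

definition "SUBR = Prim (Proj 0) (Comp PRED [Proj 1])"
lemma fn_SUBR: "fn SUBR (Suc (Suc 0)) (\<lambda>xs. xs ! 1 - xs ! 0)"
  unfolding SUBR_def
  apply (rule fn_cong[OF fn_Prim[OF fn_Proj fn_Comp1[OF fn_PRED fn_Proj]]])
    apply simp_all
  apply (case_tac xs; simp add: rn_sub rn_add rn_tri)
  done

definition "SUB = Comp SUBR [Proj 1, Proj 0]"
lemma fn_SUB: "fn SUB (Suc (Suc 0)) (\<lambda>xs. xs ! 0 - xs ! 1)"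
  unfolding SUB_def
  by (rule fn_cong[OF fn_Comp2[OF fn_SUBR fn_Proj fn_Proj]]) simp_all

definition "ADD = Prim (Proj 0) (Comp Suc_f [Proj 1])"
lemma fn_ADD: "fn ADD (Suc (Suc 0)) (\<lambda>xs. xs ! 0 + xs ! 1)"
  unfolding ADD_def
  apply (rule fn_cong[OF fn_Prim[OF fn_Proj fn_Comp1[OF fn_Suc fn_Proj]]])
    apply simp_all
  apply (case_tac xs; simp add: rn_sub rn_add rn_tri)
  done

definition "TRI = Prim Zer (Comp Suc_f [Comp ADD [Proj 0, Proj 1]])"
lemma fn_TRI: "fn TRI (Suc 0) (\<lambda>xs. triangle (hd xs))"
  unfolding TRI_def
  apply (rule fn_cong[OF fn_Prim[OF fn_Zer fn_Comp1[OF fn_Suc fn_Comp2[OF fn_ADD fn_Proj fn_Proj]]]])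
    apply simp_all
  apply (case_tac xs; simp add: rn_sub rn_add rn_tri)
  done

definition "PDF = Comp SUB [Comp Suc_f [Proj 1], Comp TRI [Comp Suc_f [Proj 0]]]"
lemma fn_PDF: "fn PDF (Suc (Suc 0)) (\<lambda>xs. Suc (xs ! 1) - triangle (Suc (xs ! 0)))"
  unfolding PDF_def
  apply (rule fn_cong[OF fn_Comp2[OF fn_SUB fn_Comp1[OF fn_Suc fn_Proj] fn_Comp1[OF fn_TRI fn_Comp1[OF fn_Suc fn_Proj]]]])
  by simp_all

definition "PDS = Mini PDF"
definition "pds z = (LEAST s. Suc z - triangle (Suc s) = 0)"

lemma triangle_ge: "n \<le> triangle n"
  by (induction n) auto

lemma fn_PDS: "fn PDS (Suc 0) (\<lambda>xs. pds (hd xs))"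
  unfolding fn_def PDS_def pds_def
proof (intro allI impI)
  fix xs :: "nat list" and y assume "length xs = Suc 0"
  then obtain z where z: "xs = [z]" by (cases xs) auto
  have "\<exists>n. Suc z - triangle (Suc n) = 0"
    by (rule exI[of _ z]) (use triangle_ge[of "Suc z"] in simp)
  then show "reval (Mini PDF) xs y = (y = (LEAST s. Suc (hd xs) - triangle (Suc s) = 0))"
    using fn_Mini[OF fn_PDF, of xs y] z by simp
qed

lemma pds_props: "z < triangle (Suc (pds z))" "triangle (pds z) \<le> z"
proof -
  have ex: "\<exists>n. Suc z - triangle (Suc n) = 0"
    by (rule exI[of _ z]) (use triangle_ge[of "Suc z"] in simp)
  have "Suc z - triangle (Suc (pds z)) = 0" unfolding pds_def using ex by (rule LeastI_ex)
  then show "z < triangle (Suc (pds z))" by simp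
  show "triangle (pds z) \<le> z"
  proof (cases "pds z")
    case 0 then show ?thesis by simp
  next
    case (Suc s)
    then have "s < pds z" by simp
    then have "Suc z - triangle (Suc s) \<noteq> 0" unfolding pds_def by (rule not_less_Least)
    then show ?thesis using Suc by simp
  qed
qed

lemma prod_decode_pds: "prod_decode z = (z - triangle (pds z), pds z - (z - triangle (pds z)))"
proof -
  have a: "z - triangle (pds z) \<le> pds z" using pds_props[of z] by simp
  have "prod_encode (z - triangle (pds z), pds z - (z - triangle (pds z))) = z"
    unfolding prod_encode_def using a pds_props(2)[of z] by simp
  then show ?thesis by (metis prod_encode_inverse)
qed

definition "FST = Comp SUB [Proj 0, Comp TRI [PDS]]"
lemma fn_FST: "fn FST (Suc 0) (\<lambda>xs. fst (prod_decode (hd xs)))"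
  unfolding FST_def
  apply (rule fn_cong[OF fn_Comp2[OF fn_SUB fn_Proj fn_Comp1[OF fn_TRI fn_PDS]]])
   apply simp
  apply (case_tac xs; simp add: prod_decode_pds)
  done

definition "SND = Comp SUB [PDS, FST]"
lemma fn_SND: "fn SND (Suc 0) (\<lambda>xs. snd (prod_decode (hd xs)))"
  unfolding SND_def
  apply (rule fn_cong[OF fn_Comp2[OF fn_SUB fn_PDS fn_FST]])
  apply (case_tac xs; simp add: prod_decode_pds)
  done

lemma len1_hd: "length xs = Suc 0 \<Longrightarrow> hd xs = xs ! 0" by (cases xs) auto

definition "TL = Comp SND [Comp PRED [Proj 0]]"
lemma fn_TL: "fn TL (Suc 0) (\<lambda>xs. snd (prod_decode (hd xs - 1)))"
  unfolding TL_def
  apply (rule fn_cong[OF fn_Comp1[OF fn_SND fn_Comp1[OF fn_PRED fn_Proj]]])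
  apply (simp_all add: len1_hd)
  done

definition "HD = Comp FST [Comp PRED [Proj 0]]"
lemma fn_HD: "fn HD (Suc 0) (\<lambda>xs. fst (prod_decode (hd xs - 1)))"
  unfolding HD_def
  apply (rule fn_cong[OF fn_Comp1[OF fn_FST fn_Comp1[OF fn_PRED fn_Proj]]])
  apply (simp_all add: len1_hd)
  done

lemma pd0: "prod_decode 0 = (0, 0)" by (simp add: prod_decode_def prod_decode_aux.simps)

definition "tlc c = snd (prod_decode (c - 1))"
definition "hdc c = fst (prod_decode (c - 1))"

lemma tlc_enc: "tlc (list_encode l) = list_encode (tl l)"
  by (cases l) (auto simp: tlc_def pd0)

lemma hdc_enc: "l \<noteq> [] \<Longrightarrow> hdc (list_encode l) = hd l"
  by (cases l) (auto simp: hdc_def)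

lemma rn_tlc: "rec_nat x (\<lambda>n y. snd (prod_decode (y - Suc 0))) a = (tlc^^a) x"
  by (induction a) (auto simp: tlc_def)

definition "ITL = Prim (Proj 0) (Comp TL [Proj 1])"
lemma fn_ITL: "fn ITL (Suc (Suc 0)) (\<lambda>xs. (tlc ^^ (xs ! 0)) (xs ! 1))"
  unfolding ITL_def
  apply (rule fn_cong[OF fn_Prim[OF fn_Proj fn_Comp1[OF fn_TL fn_Proj]]])
    apply simp_all
  apply (case_tac xs; simp add: rn_tlc)
  done

lemma itl_enc: "(tlc ^^ j) (list_encode l) = list_encode (drop j l)"
  by (induction j) (auto simp: tlc_enc drop_Suc tl_drop)

definition "NZ = Mini (Comp SUB [Comp Suc_f [Zer], Proj 1])"
lemma reval_NZ: "reval NZ [c] y \<longleftrightarrow> (c \<noteq> 0 \<and> y = 0)"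
proof -
  have f: "fn (Comp SUB [Comp Suc_f [Zer], Proj 1]) (Suc (Suc 0)) (\<lambda>xs. 1 - xs ! 1)"
    by (rule fn_cong[OF fn_Comp2[OF fn_SUB fn_Comp1[OF fn_Suc fn_Zer] fn_Proj]]) simp_all
  show ?thesis
  proof (cases "c = 0")
    case True
    have "\<not> reval NZ [c] y"
      unfolding NZ_def reval_Mini_iff using f True by (simp add: fn_def)
    then show ?thesis using True by simp
  next
    case False
    show ?thesis
      unfolding NZ_def using fn_Mini[OF f, of "[c]" y] False by simp
  qed
qed

definition "EP IDX = Comp ADD [Comp HD [Comp ITL [IDX, Proj 0]], Comp NZ [Comp ITL [IDX, Proj 0]]]"

lemma reval_Comp1_iff: "reval (Comp f [g]) xs z \<longleftrightarrow> (\<exists>y. reval g xs y \<and> reval f [y] z)"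
  unfolding reval_Comp_iff by (auto simp: list_all2_Cons1)

lemma reval_Comp2_iff: "reval (Comp f [g, h]) xs z \<longleftrightarrow> (\<exists>y1 y2. reval g xs y1 \<and> reval h xs y2 \<and> reval f [y1, y2] z)"
  unfolding reval_Comp_iff by (auto simp: list_all2_Cons1)

lemma list_encode_0_iff: "list_encode l = 0 \<longleftrightarrow> l = []"
  by (cases l) auto

lemma reval_EP:
  assumes IDX: "fn IDX (Suc (Suc 0)) I"
  shows "reval (EP IDX) [c, n] y \<longleftrightarrow>
    (I [c, n] < length (list_decode c) \<and> y = list_decode c ! I [c, n])"
proof -
  define l where "l = list_decode c"
  have c: "c = list_encode l" by (simp add: l_def)
  have T: "fn (Comp ITL [IDX, Proj 0]) (Suc (Suc 0)) (\<lambda>xs. (tlc ^^ I xs) (xs ! 0))"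
    by (rule fn_cong[OF fn_Comp2[OF fn_ITL IDX fn_Proj]]) (simp_all add: numeral_2_eq_2)
  have H: "fn (Comp HD [Comp ITL [IDX, Proj 0]]) (Suc (Suc 0)) (\<lambda>xs. hdc ((tlc ^^ I xs) (xs ! 0)))"
    by (rule fn_cong[OF fn_Comp1[OF fn_HD T]]) (simp add: hdc_def)
  have tj: "(tlc ^^ j) c = list_encode (drop j l)" for j by (simp only: c itl_enc)
  define t where "t = (tlc ^^ I [c, n]) c"
  have Tc: "reval (Comp ITL [IDX, Proj 0]) [c, n] y \<longleftrightarrow> y = t" for y
    using T by (simp add: fn_def t_def)
  have t0: "t \<noteq> 0 \<longleftrightarrow> I [c, n] < length l"
    unfolding t_def tj list_encode_0_iff by (auto simp: not_le)
  have nz: "reval (Comp NZ [Comp ITL [IDX, Proj 0]]) [c, n] z \<longleftrightarrow> (I [c, n] < length l \<and> z = 0)" for z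
    unfolding reval_Comp1_iff Tc reval_NZ using t0 by auto
  have Hc: "reval (Comp HD [Comp ITL [IDX, Proj 0]]) [c, n] z \<longleftrightarrow> z = hdc t" for z
    using H by (simp add: fn_def t_def)
  have hd: "I [c, n] < length l \<Longrightarrow> hdc t = l ! I [c, n]"
    unfolding t_def tj by (simp add: hdc_enc hd_drop_conv_nth)
  have A: "reval ADD [a, b] z \<longleftrightarrow> z = a + b" for a b z
    using fn_ADD by (simp add: fn_def)
  show ?thesis
    unfolding EP_def reval_Comp2_iff Hc nz A
    using hd by (auto simp flip: l_def)
qed


lemma list_decode_prefix: "list_decode (prefix_code p k) = map p [0..<k]"
  by (simp add: prefix_code_def)

lemma computable_sel:
  assumes IDX: "fn IDX (Suc (Suc 0)) I" and If: "\<And>c n. I [c, n] = f n"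
  shows "computable (\<lambda>p. Some (\<lambda>n. p (f n)))"
  unfolding computable_def
proof (rule exI[of _ "EP IDX"], intro allI impI)
  fix p q :: baire assume "Some (\<lambda>n. p (f n)) = Some q"
  then have q: "q = (\<lambda>n. p (f n))" by simp
  have 1: "reval (EP IDX) [prefix_code p (Suc (f n)), n] (q n)" for n
    using reval_EP[OF IDX] by (simp add: list_decode_prefix If q nth_append)
  show "(\<forall>n. \<exists>k. reval (EP IDX) [prefix_code p k, n] (q n)) \<and>
        (\<forall>k n m. reval (EP IDX) [prefix_code p k, n] m \<longrightarrow> m = q n)"
    using reval_EP[OF IDX] 1 by (auto simp: list_decode_prefix If q)
qed

lemma computable_id: "computable (\<lambda>p. Some p)"
  using computable_sel[OF fn_Proj[of 1 "Suc (Suc 0)"], of id] by simp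

lemma computable_odd: "computable (\<lambda>t. Some (\<lambda>n. t (Suc (n + n))))"
proof -
  have "fn (Comp Suc_f [Comp ADD [Proj 1, Proj 1]]) (Suc (Suc 0)) (\<lambda>xs. Suc (xs ! 1 + xs ! 1))"
    by (rule fn_cong[OF fn_Comp1[OF fn_Suc fn_Comp2[OF fn_ADD fn_Proj fn_Proj]]]) simp_all
  from computable_sel[OF this, of "\<lambda>n. Suc (n + n)"] show ?thesis by simp
qed

lemma pos_dir:
  assumes "\<delta> \<le> \<epsilon>"
  shows "strong_weihrauch_le (PC X B rp \<mu> \<epsilon>) (PC X B rp \<mu> \<delta>)"
    "weihrauch_le (PC X B rp \<mu> \<epsilon>) (PC X B rp \<mu> \<delta>)"
proof -
  have R: "realizes (PC X B rp \<mu> \<epsilon>) G" if "realizes (PC X B rp \<mu> \<delta>) G" for G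
    using that assms unfolding realizes_def PC_def by fastforce
  show "strong_weihrauch_le (PC X B rp \<mu> \<epsilon>) (PC X B rp \<mu> \<delta>)"
    unfolding strong_weihrauch_le_def
    by (rule exI[of _ Some], rule exI[of _ Some]) (auto simp: computable_id[unfolded] R)
  have odd: "(\<lambda>n. bpair p s (Suc (n + n))) = s" for p s
    by (auto simp: bpair_def)
  show "weihrauch_le (PC X B rp \<mu> \<epsilon>) (PC X B rp \<mu> \<delta>)"
    unfolding weihrauch_le_def
    apply (rule exI[of _ "\<lambda>t. Some (\<lambda>n. t (Suc (n + n)))"], rule exI[of _ Some])
    using computable_odd computable_id R by (simp add: odd)
qed


lemma bchoice_le: "(\<forall>j<(N::nat). \<exists>k::nat. P j k) \<Longrightarrow> \<exists>M. \<forall>j<N. \<exists>k\<le>M. P j k"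
proof (induction N)
  case 0 then show ?case by simp
next
  case (Suc N)
  then obtain M where M: "\<forall>j<N. \<exists>k\<le>M. P j k" by auto
  from Suc.prems obtain k0 where k0: "P N k0" by auto
  have "\<forall>j<Suc N. \<exists>k\<le>max M k0. P j k"
  proof (intro allI impI)
    fix j assume j: "j < Suc N"
    show "\<exists>k\<le>max M k0. P j k"
    proof (cases "j < N")
      case True
      then obtain k where "k \<le> M" "P j k" using M by auto
      then show ?thesis by (intro exI[of _ k]) (auto simp: le_max_iff_disj)
    next
      case False
      then have "j = N" using j by simp
      then show ?thesis using k0 by (intro exI[of _ k0]) auto
    qed
  qed
  then show ?case by blast
qed

lemma small_subset:
  fixes a :: "'c \<Rightarrow> real"
  assumes fin: "finite C" and nn: "\<And>c. c \<in> C \<Longrightarrow> a c \<ge> 0" and kC: "k \<le> card C"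
  shows "\<exists>J\<subseteq>C. card J = k \<and> sum a J * card C \<le> k * sum a C"
  using kC
proof (induction k rule: inc_induct)
  case base
  show ?case by (rule exI[of _ C]) simp
next
  case (step n)
  then obtain J where J: "J \<subseteq> C" "card J = Suc n" "sum a J * card C \<le> Suc n * sum a C" by auto
  have finJ: "finite J" using J(1) fin finite_subset by blast
  have "J \<noteq> {}" using J(2) by auto
  have "Max (a ` J) \<in> a ` J" using finJ \<open>J \<noteq> {}\<close> by (intro Max_in) auto
  then obtain m where m1: "m \<in> J" "a m = Max (a ` J)" by auto
  have m2: "\<forall>x\<in>J. a x \<le> a m" using finJ m1 by auto
  note m = m1(1) m2
  have "sum a J \<le> of_nat (card J) * a m"
    using sum_bounded_above[of J a "a m"] m by auto
  then have am: "sum a J \<le> real (Suc n) * a m" using J(2) by simp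
  have s': "sum a (J - {m}) = sum a J - a m" using finJ m(1) by (simp add: sum_diff1)
  have nnJ: "sum a J \<ge> 0" using nn J(1) by (auto intro: sum_nonneg)
  have nC: "real (card C) \<ge> 0" by simp
  have eq: "sum a (J - {m}) * real (Suc n) = (sum a J - a m) + real n * sum a J - real n * a m"
    by (simp add: s' algebra_simps)
  have am2: "sum a J \<le> a m + real n * a m" using am by (simp add: algebra_simps)
  have "sum a (J - {m}) * real (Suc n) \<le> real n * sum a J"
    unfolding eq using am2 by linarith
  then have "sum a (J - {m}) * real (Suc n) * card C \<le> real n * (sum a J * card C)"
    using nC by (metis mult.assoc mult_right_mono)
  also have "\<dots> \<le> real n * (Suc n * sum a C)"
    using J(3) by (simp add: mult_left_mono)
  finally have "sum a (J - {m}) * card C * real (Suc n) \<le> (real n * sum a C) * real (Suc n)"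
    by (simp add: algebra_simps)
  then have "sum a (J - {m}) * card C \<le> real n * sum a C" by simp
  moreover have "card (J - {m}) = n" using J(2) m(1) finJ by simp
  ultimately show ?case using J(1) by (intro exI[of _ "J - {m}"]) auto
qed

lemma (in finite_measure) measure_Int_lower:
  assumes "A \<in> sets M" "B \<in> sets M" "Z \<in> sets M" "A \<subseteq> Z" "B \<subseteq> Z"
  shows "measure M A + measure M B - measure M Z \<le> measure M (A \<inter> B)"
proof -
  have "measure M (A \<union> B) = measure M A + measure M (B - A)" using assms finite_measure_Union' by blast
  also have "measure M (B - A) = measure M B - measure M (B \<inter> A)" using assms finite_measure_Diff' by blast
  finally have "measure M (A \<union> B) = measure M A + measure M B - measure M (A \<inter> B)" by (simp add: Int_commute)
  moreover have "measure M (A \<union> B) \<le> measure M Z" using assms by (intro finite_measure_mono) auto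
  ultimately show ?thesis by simp
qed

definition nset :: "'x set \<Rightarrow> (nat \<Rightarrow> 'x set) \<Rightarrow> baire \<Rightarrow> 'x set" where
  "nset X Bs r = X - (\<Union>n\<in>{n. r n \<noteq> 0}. Bs (r n - 1))"

definition nsetN :: "'x set \<Rightarrow> (nat \<Rightarrow> 'x set) \<Rightarrow> baire \<Rightarrow> nat \<Rightarrow> 'x set" where
  "nsetN X Bs r N = X - (\<Union>n\<in>{n. n < N \<and> r n \<noteq> 0}. Bs (r n - 1))"

definition ext :: "nat list \<Rightarrow> baire" where
  "ext l = (\<lambda>i. if i < length l then l ! i else 0)"

lemma prefix_code_cong: "(\<forall>i<k. p i = p' i) \<Longrightarrow> prefix_code p k = prefix_code p' k"
  unfolding prefix_code_def by (rule arg_cong[where f=list_encode], rule map_cong) auto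


lemma neg_core:
  fixes X :: "'x set" and Bs :: "nat \<Rightarrow> 'x set" and rp :: "baire \<Rightarrow> 'x \<Rightarrow> bool"
    and \<mu> :: "'x measure" and nm :: "'x \<Rightarrow> baire" and K H :: pfun and eK eH :: recf
    and cc :: "baire \<Rightarrow> baire \<Rightarrow> baire" and \<epsilon> \<delta> :: real
    and cellty :: "'c itself"
  assumes prob: "prob_space \<mu>" and sp: "space \<mu> = X" and Bm: "\<And>n. Bs n \<in> sets \<mu>"
    and nmm: "\<And>M P. {y\<in>X. P (map (nm y) [0..<M])} \<in> sets \<mu>"
    and ccp: "\<And>p p' s k. (\<forall>i<k. p i = p' i) \<Longrightarrow> prefix_code (cc p s) k = prefix_code (cc p' s) k"
    and ccs: "\<And>p s s' k. (\<forall>i<k. s i = s' i) \<Longrightarrow> prefix_code (cc p s) k = prefix_code (cc p s') k"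
    and eKs: "\<And>p r. K p = Some r \<Longrightarrow> \<forall>n. \<exists>k. reval eK [prefix_code p k, n] (r n)"
    and eKu: "\<And>p r k n m. K p = Some r \<Longrightarrow> reval eK [prefix_code p k, n] m \<Longrightarrow> m = r n"
    and eHs: "\<And>p r. H p = Some r \<Longrightarrow> \<forall>n. \<exists>k. reval eH [prefix_code p k, n] (r n)"
    and eHu: "\<And>p r k n m. H p = Some r \<Longrightarrow> reval eH [prefix_code p k, n] m \<Longrightarrow> m = r n"
    and F0: "\<And>p A. neg_closed_rep X Bs p A \<Longrightarrow> measure \<mu> A > \<epsilon> \<Longrightarrow>
       \<exists>r. K p = Some r \<and> measure \<mu> (nset X Bs r) > \<delta> \<and>
         (\<forall>y\<in>nset X Bs r. \<exists>q x. H (cc p (nm y)) = Some q \<and> rp q x \<and> x \<in> A)"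
    and scheme: "\<And>\<gamma>. \<gamma> > 0 \<Longrightarrow> \<exists>L k (C :: 'c set) cellOf R. finite C \<and> card C > 0 \<and> k \<le> card C \<and>
       real k / real (card C) < \<epsilon> + \<gamma> \<and> (\<forall>l. cellOf l \<in> C) \<and>
       (\<forall>q x. rp q x \<longrightarrow> x \<in> \<Union>(Bs ` set (R (cellOf (map q [0..<L]))))) \<and>
       (\<forall>W\<subseteq>C. card W + k \<le> card C \<longrightarrow> measure \<mu> (X - (\<Union>c\<in>W. \<Union>(Bs ` set (R c)))) > \<epsilon>)"
    and eps: "0 \<le> \<epsilon>" "\<epsilon> < \<delta>" "\<delta> \<le> 1"
  shows False
proof -
  interpret prob_space \<mu> by (rule prob)
  have Xs: "X \<in> sets \<mu>" using sets.top[of \<mu>] sp by simp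
  have UNm: "(\<Union>n\<in>S. Bs (f n)) \<in> sets \<mu>" for S :: "nat set" and f
    by (intro sets.countable_UN'') (auto simp: Bm)
  have nset_m: "nset X Bs r \<in> sets \<mu>" for r
    unfolding nset_def using Xs UNm by (intro sets.Diff) auto
  have nsetN_m: "nsetN X Bs r N \<in> sets \<mu>" for r N
    unfolding nsetN_def using Xs UNm by (intro sets.Diff) auto
  define p0 :: baire where "p0 = (\<lambda>_. 0)"
  have "neg_closed_rep X Bs p0 X" by (simp add: neg_closed_rep_def p0_def)
  moreover have "measure \<mu> X > \<epsilon>" using prob_space sp eps by simp
  ultimately have "\<exists>r. K p0 = Some r \<and> measure \<mu> (nset X Bs r) > \<delta> \<and>
         (\<forall>y\<in>nset X Bs r. \<exists>q x. H (cc p0 (nm y)) = Some q \<and> rp q x \<and> x \<in> X)" by (rule F0)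
  then obtain r0 where r0: "K p0 = Some r0" "measure \<mu> (nset X Bs r0) > \<delta>"
      "\<forall>y\<in>nset X Bs r0. \<exists>q x. H (cc p0 (nm y)) = Some q \<and> rp q x \<and> x \<in> X"
    by blast
  define B0 where "B0 = nset X Bs r0"
  have B0X: "B0 \<subseteq> X" unfolding B0_def nset_def by auto
  define \<gamma> where "\<gamma> = (\<delta> - \<epsilon>) / 4"
  have \<gamma>: "\<gamma> > 0" using eps by (simp add: \<gamma>_def)
  obtain L k and C :: "'c set" and cellOf R where sch: "finite C" "card C > 0" "k \<le> card C"
      "real k / real (card C) < \<epsilon> + \<gamma>" "\<forall>l. cellOf l \<in> C"
      "\<forall>q x. rp q x \<longrightarrow> x \<in> \<Union>(Bs ` set (R (cellOf (map q [0..<L]))))"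
      "\<forall>W\<subseteq>C. card W + k \<le> card C \<longrightarrow> measure \<mu> (X - (\<Union>c\<in>W. \<Union>(Bs ` set (R c)))) > \<epsilon>"
    using scheme[OF \<gamma>] by blast
  have dec: "decseq (nsetN X Bs r0)"
    unfolding decseq_def nsetN_def by (auto dest: order.strict_trans2)
  have inter: "(\<Inter>N. nsetN X Bs r0 N) = B0"
    unfolding B0_def nset_def nsetN_def by auto
  have "(\<lambda>N. measure \<mu> (nsetN X Bs r0 N)) \<longlonglongrightarrow> measure \<mu> B0"
    using finite_Lim_measure_decseq[of "nsetN X Bs r0"] dec nsetN_m inter by auto
  then have "eventually (\<lambda>N. measure \<mu> (nsetN X Bs r0 N) < measure \<mu> B0 + \<gamma>) sequentially"
    using \<gamma> by (intro order_tendstoD(2)) auto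
  then obtain N' where N': "measure \<mu> (nsetN X Bs r0 N') < measure \<mu> B0 + \<gamma>"
    by (auto simp: eventually_sequentially)
  have "\<forall>j<N'. \<exists>k. reval eK [prefix_code p0 k, j] (r0 j)" using eKs[OF r0(1)] by auto
  from bchoice_le[OF this] obtain M1 where M1: "\<forall>j<N'. \<exists>k\<le>M1. reval eK [prefix_code p0 k, j] (r0 j)"
    by blast
  define Dl where "Dl M l = (\<forall>i<L. \<exists>k\<le>M. \<exists>m. reval eH [prefix_code (cc p0 (ext l)) k, i] m)" for M l
  define S where "S M = B0 \<inter> {y\<in>X. Dl M (map (nm y) [0..<M])}" for M
  have pcext: "k \<le> M \<Longrightarrow> prefix_code (cc p (ext (map (nm y) [0..<M]))) k = prefix_code (cc p (nm y)) k"
    for p y k M by (rule ccs) (auto simp: ext_def)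
  have S_iff: "y \<in> S M \<longleftrightarrow> y \<in> B0 \<and> (\<forall>i<L. \<exists>k\<le>M. \<exists>m. reval eH [prefix_code (cc p0 (nm y)) k, i] m)"
    for y M
  proof -
    have "B0 \<subseteq> X" unfolding B0_def nset_def by auto
    have "Dl M (map (nm y) [0..<M]) \<longleftrightarrow> (\<forall>i<L. \<exists>k\<le>M. \<exists>m. reval eH [prefix_code (cc p0 (nm y)) k, i] m)"
      unfolding Dl_def
    proof (intro iffI allI impI)
      fix i assume A: "\<forall>i<L. \<exists>k\<le>M. \<exists>m. reval eH [prefix_code (cc p0 (ext (map (nm y) [0..<M]))) k, i] m" and i: "i < L"
      then obtain k m where "k \<le> M" "reval eH [prefix_code (cc p0 (ext (map (nm y) [0..<M]))) k, i] m" by blast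
      then show "\<exists>k\<le>M. \<exists>m. reval eH [prefix_code (cc p0 (nm y)) k, i] m" using pcext[of k M p0 y] by (intro exI[of _ k] conjI exI[of _ m]) auto
    next
      fix i assume A: "\<forall>i<L. \<exists>k\<le>M. \<exists>m. reval eH [prefix_code (cc p0 (nm y)) k, i] m" and i: "i < L"
      then obtain k m where "k \<le> M" "reval eH [prefix_code (cc p0 (nm y)) k, i] m" by blast
      then show "\<exists>k\<le>M. \<exists>m. reval eH [prefix_code (cc p0 (ext (map (nm y) [0..<M]))) k, i] m" using pcext[of k M p0 y] by (intro exI[of _ k] conjI exI[of _ m]) auto
    qed
    then show ?thesis unfolding S_def using \<open>B0 \<subseteq> X\<close> by auto
  qed
  have S_m: "S M \<in> sets \<mu>" for M
    unfolding S_def B0_def using nset_m nmm by (intro sets.Int) auto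
  have inc: "incseq S"
    unfolding incseq_def
  proof (intro allI impI subsetI)
    fix m n y assume mn: "m \<le> n" and "y \<in> S m"
    then show "y \<in> S n" unfolding S_iff using order.trans[OF _ mn] by blast
  qed
  have union: "(\<Union>M. S M) = B0"
  proof
    show "(\<Union>M. S M) \<subseteq> B0" using S_iff by auto
    show "B0 \<subseteq> (\<Union>M. S M)"
    proof
      fix y assume y: "y \<in> B0"
      then obtain q where q: "H (cc p0 (nm y)) = Some q" using r0(3) B0_def by blast
      have "\<forall>i<L. \<exists>k. reval eH [prefix_code (cc p0 (nm y)) k, i] (q i)" using eHs[OF q] by auto
      from bchoice_le[OF this] obtain M where "\<forall>i<L. \<exists>k\<le>M. reval eH [prefix_code (cc p0 (nm y)) k, i] (q i)"
        by blast
      then have "y \<in> S M" using S_iff y by blast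
      then show "y \<in> (\<Union>M. S M)" by blast
    qed
  qed
  have "(\<lambda>M. measure \<mu> (S M)) \<longlonglongrightarrow> measure \<mu> B0"
    using finite_Lim_measure_incseq[of S] inc S_m union by auto
  then have "eventually (\<lambda>M. measure \<mu> (S M) > measure \<mu> B0 - \<gamma>) sequentially"
    using \<gamma> by (intro order_tendstoD(1)) auto
  then obtain M2 where M2: "\<And>M. M \<ge> M2 \<Longrightarrow> measure \<mu> (S M) > measure \<mu> B0 - \<gamma>"
    by (auto simp: eventually_sequentially)
  define M where "M = max M1 M2"
  have SM: "measure \<mu> (S M) > measure \<mu> B0 - \<gamma>" using M2 by (simp add: M_def)
  define outl where "outl l = map (\<lambda>i. THE m. \<exists>k\<le>M. reval eH [prefix_code (cc p0 (ext l)) k, i] m) [0..<L]" for l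
  define Sc where "Sc c = S M \<inter> {y\<in>X. cellOf (outl (map (nm y) [0..<M])) = c}" for c
  have Sc_m: "Sc c \<in> sets \<mu>" for c
    unfolding Sc_def using S_m nmm by (intro sets.Int) auto
  have disj: "disjoint_family_on Sc C"
    unfolding disjoint_family_on_def Sc_def by auto
  have SMU: "S M = (\<Union>c\<in>C. Sc c)"
  proof -
    have "S M \<subseteq> X" using S_iff B0X by blast
    then show ?thesis unfolding Sc_def using sch(5) by auto
  qed
  define a where "a c = measure \<mu> (Sc c)" for c
  have sumC: "sum a C = measure \<mu> (S M)"
    unfolding SMU a_def using sch(1) Sc_m disj by (intro finite_measure_finite_Union[symmetric]) auto
  obtain J where J: "J \<subseteq> C" "card J = k" "sum a J * card C \<le> k * sum a C"
    using small_subset[OF sch(1), of a k] sch(3) by (auto simp: a_def)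
  define W where "W = C - J"
  have finW: "finite W" using sch(1) W_def by simp
  have cardW: "card W + k \<le> card C"
    unfolding W_def using J sch(1) sch(3) by (simp add: card_Diff_subset finite_subset)
  have sumW: "sum a W = sum a C - sum a J"
    unfolding W_def using J(1) sch(1) by (simp add: sum_diff finite_subset)
  have sC1: "sum a C \<le> 1" using sumC by simp
  have sJ: "sum a J \<le> real k / real (card C)"
  proof -
    have "sum a J \<le> real k * sum a C / real (card C)"
      using J(3) sch(2) by (simp add: pos_le_divide_eq)
    also have "\<dots> \<le> real k * 1 / real (card C)"
      using sC1 by (intro divide_right_mono mult_left_mono) auto
    finally show ?thesis by simp
  qed
  have sumW_lb: "sum a W > measure \<mu> B0 - \<epsilon> - 2 * \<gamma>"
    using sumW sJ sch(4) SM sumC by linarith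
  obtain wl where wl: "set wl = W" using finite_list[OF finW] by blast
  define ws where "ws = concat (map R wl)"
  define p' :: baire where "p' i = (if i < M then 0 else if i - M < length ws then Suc (ws ! (i - M)) else 0)" for i
  define U where "U = (\<Union>c\<in>W. \<Union>(Bs ` set (R c)))"
  define A' where "A' = X - U"
  have setws: "set ws = (\<Union>c\<in>W. set (R c))"
    unfolding ws_def using wl by auto
  have img: "(\<lambda>n. p' n - 1) ` {n. p' n \<noteq> 0} = set ws"
  proof
    show "(\<lambda>n. p' n - 1) ` {n. p' n \<noteq> 0} \<subseteq> set ws"
      by (auto simp: p'_def split: if_splits)
    show "set ws \<subseteq> (\<lambda>n. p' n - 1) ` {n. p' n \<noteq> 0}"
    proof
      fix x assume "x \<in> set ws"
      then obtain j where j: "j < length ws" "ws ! j = x" by (auto simp: in_set_conv_nth)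
      then have "p' (M + j) = Suc x" by (simp add: p'_def)
      then show "x \<in> (\<lambda>n. p' n - 1) ` {n. p' n \<noteq> 0}"
        by (intro image_eqI[of _ _ "M + j"]) auto
    qed
  qed
  have "(\<Union>n\<in>{n. p' n \<noteq> 0}. Bs (p' n - 1)) = \<Union>(Bs ` ((\<lambda>n. p' n - 1) ` {n. p' n \<noteq> 0}))"
    by auto
  also have "\<dots> = U" unfolding img setws U_def by auto
  finally have ncr: "neg_closed_rep X Bs p' A'" by (simp add: neg_closed_rep_def A'_def)
  have WC: "W \<subseteq> C" unfolding W_def by blast
  have mA': "measure \<mu> A' > \<epsilon>"
    unfolding A'_def U_def using sch(7) cardW WC by blast
  obtain r' where r': "K p' = Some r'" "measure \<mu> (nset X Bs r') > \<delta>"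
      "\<forall>y\<in>nset X Bs r'. \<exists>q x. H (cc p' (nm y)) = Some q \<and> rp q x \<and> x \<in> A'"
    using F0[OF ncr mA'] by blast
  have agree: "\<forall>i<M. p' i = p0 i" by (simp add: p'_def p0_def)
  have rr: "r' j = r0 j" if "j < N'" for j
  proof -
    have "\<exists>k\<le>M1. reval eK [prefix_code p0 k, j] (r0 j)" using M1[rule_format, OF that] .
    then obtain kk where kk: "kk \<le> M1" "reval eK [prefix_code p0 kk, j] (r0 j)" by blast
    have "kk \<le> M" using kk(1) by (simp add: M_def)
    then have "prefix_code p' kk = prefix_code p0 kk"
      using agree by (intro prefix_code_cong) auto
    then have "reval eK [prefix_code p' kk, j] (r0 j)" using kk(2) by simp
    from eKu[OF r'(1) this] show ?thesis by simp
  qed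
  have B'sub: "nset X Bs r' \<subseteq> nsetN X Bs r0 N'"
  proof
    fix x assume x: "x \<in> nset X Bs r'"
    have "x \<in> X" using x unfolding nset_def by blast
    moreover have "x \<notin> Bs (r0 n - 1)" if "n < N'" "r0 n \<noteq> 0" for n
    proof -
      have e: "r' n = r0 n" by (rule rr[OF that(1)])
      then have "r' n \<noteq> 0" using that(2) by simp
      then have "x \<notin> Bs (r' n - 1)" using x unfolding nset_def by blast
      then show ?thesis using e by simp
    qed
    ultimately show "x \<in> nsetN X Bs r0 N'" unfolding nsetN_def by blast
  qed
  define T where "T = (\<Union>c\<in>W. Sc c)"
  have T_m: "T \<in> sets \<mu>" unfolding T_def using finW Sc_m by (intro sets.finite_UN) auto
  have muT: "measure \<mu> T = sum a W"
    unfolding T_def a_def using finW Sc_m disjoint_family_on_mono[OF WC disj]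
    by (intro finite_measure_finite_Union) auto
  have Tsub: "T \<subseteq> nsetN X Bs r0 N'"
  proof -
    have "T \<subseteq> S M" unfolding T_def Sc_def by blast
    also have "\<dots> \<subseteq> B0" using S_iff by blast
    also have "\<dots> \<subseteq> nsetN X Bs r0 N'" unfolding B0_def nset_def nsetN_def by auto
    finally show ?thesis .
  qed
  have "measure \<mu> (nset X Bs r') + measure \<mu> T - measure \<mu> (nsetN X Bs r0 N') \<le> measure \<mu> (nset X Bs r' \<inter> T)"
    using nset_m T_m nsetN_m B'sub Tsub by (intro measure_Int_lower) auto
  moreover have "measure \<mu> (nset X Bs r') + measure \<mu> T - measure \<mu> (nsetN X Bs r0 N') > 0"
  proof -
    have "\<delta> - \<epsilon> = 4 * \<gamma>" unfolding \<gamma>_def by simp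
    then show ?thesis using r'(2) muT sumW_lb N' \<gamma> by linarith
  qed
  ultimately have "nset X Bs r' \<inter> T \<noteq> {}" by auto
  then obtain y c where y: "y \<in> nset X Bs r'" "c \<in> W" "y \<in> Sc c" unfolding T_def by blast
  obtain q x where qx: "H (cc p' (nm y)) = Some q" "rp q x" "x \<in> A'" using r'(3) y(1) by blast
  have yS: "y \<in> S M" using y(3) unfolding Sc_def by blast
  define l where "l = map (nm y) [0..<M]"
  have outq: "outl l = map q [0..<L]"
    unfolding outl_def
  proof (rule map_cong[OF refl])
    fix i assume "i \<in> set [0..<L]"
    then have i: "i < L" by simp
    have pc: "kk \<le> M \<Longrightarrow> prefix_code (cc p0 (ext l)) kk = prefix_code (cc p' (nm y)) kk" for kk
      using pcext[of kk M p0 y] ccp[of kk p0 p' "nm y"] agree unfolding l_def by auto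
    obtain kk m where km: "kk \<le> M" "reval eH [prefix_code (cc p0 (nm y)) kk, i] m"
      using yS S_iff i by blast
    show "(THE m. \<exists>k\<le>M. reval eH [prefix_code (cc p0 (ext l)) k, i] m) = q i"
    proof (rule the_equality)
      have "reval eH [prefix_code (cc p' (nm y)) kk, i] m"
        using km pc pcext[of kk M p0 y] unfolding l_def by auto
      then have "m = q i" using eHu[OF qx(1)] by blast
      then show "\<exists>k\<le>M. reval eH [prefix_code (cc p0 (ext l)) k, i] (q i)"
        using km pcext[of kk M p0 y] unfolding l_def by auto
    next
      fix m' assume "\<exists>k\<le>M. reval eH [prefix_code (cc p0 (ext l)) k, i] m'"
      then obtain k' where "k' \<le> M" "reval eH [prefix_code (cc p0 (ext l)) k', i] m'" by blast
      then have "reval eH [prefix_code (cc p' (nm y)) k', i] m'" using pc by simp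
      then show "m' = q i" using eHu[OF qx(1)] by blast
    qed
  qed
  have "cellOf (map q [0..<L]) = c" using y(3) outq unfolding Sc_def l_def by simp
  then have "x \<in> \<Union>(Bs ` set (R c))" using sch(6) qx(2) by metis
  then have "x \<in> U" using y(2) U_def by blast
  then show False using qx(3) A'_def by blast
qed


lemma nset_rep: "neg_closed_rep X Bs p A \<longleftrightarrow> A = nset X Bs p"
  by (simp add: neg_closed_rep_def nset_def)

lemma bpair_pc1: "(\<forall>i<k. p i = p' i) \<Longrightarrow> prefix_code (bpair p s) k = prefix_code (bpair p' s) k"
  by (rule prefix_code_cong) (auto simp: bpair_def)

lemma bpair_pc2: "(\<forall>i<k. s i = s' i) \<Longrightarrow> prefix_code (bpair p s) k = prefix_code (bpair p s') k"
  by (rule prefix_code_cong) (auto simp: bpair_def)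

lemma neg_generic:
  fixes X :: "'x set" and Bs :: "nat \<Rightarrow> 'x set" and rp :: "baire \<Rightarrow> 'x \<Rightarrow> bool"
    and \<mu> \<mu>' :: "'x measure" and nm :: "'x \<Rightarrow> baire" and \<epsilon> \<delta> :: real
    and cellty :: "'c itself"
  assumes prob: "prob_space \<mu>" and sp: "space \<mu> = X" and Bm: "\<And>n. Bs n \<in> sets \<mu>"
    and nmm: "\<And>M P. {y\<in>X. P (map (nm y) [0..<M])} \<in> sets \<mu>"
    and nm: "\<And>y. y \<in> X \<Longrightarrow> rp (nm y) y"
    and mu': "\<And>A. A \<in> sets \<mu> \<Longrightarrow> measure \<mu>' A = measure \<mu> A"
    and scheme: "\<And>\<gamma>. \<gamma> > 0 \<Longrightarrow> \<exists>L k (C :: 'c set) cellOf R. finite C \<and> card C > 0 \<and> k \<le> card C \<and>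
       real k / real (card C) < \<epsilon> + \<gamma> \<and> (\<forall>l. cellOf l \<in> C) \<and>
       (\<forall>q x. rp q x \<longrightarrow> x \<in> \<Union>(Bs ` set (R (cellOf (map q [0..<L]))))) \<and>
       (\<forall>W\<subseteq>C. card W + k \<le> card C \<longrightarrow> measure \<mu> (X - (\<Union>c\<in>W. \<Union>(Bs ` set (R c)))) > \<epsilon>)"
    and eps: "0 \<le> \<epsilon>" "\<epsilon> < \<delta>" "\<delta> \<le> 1"
  shows "\<not> weihrauch_le (PC X Bs rp \<mu>' \<epsilon>) (PC X Bs rp \<mu>' \<delta>)"
    "\<not> strong_weihrauch_le (PC X Bs rp \<mu>' \<epsilon>) (PC X Bs rp \<mu>' \<delta>)"
proof -
  interpret prob_space \<mu> by (rule prob)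
  have Xs: "X \<in> sets \<mu>" using sets.top[of \<mu>] sp by simp
  have nset_m: "nset X Bs r \<in> sets \<mu>" for r
  proof -
    have "(\<Union>n\<in>{n. r n \<noteq> 0}. Bs (r n - 1)) \<in> sets \<mu>"
      by (intro sets.countable_UN'') (auto simp: Bm)
    then show ?thesis unfolding nset_def using Xs by (intro sets.Diff) auto
  qed
  have nsetX: "nset X Bs r \<subseteq> X" for r unfolding nset_def by blast
  define G0 :: pfun where "G0 r = (if nset X Bs r \<noteq> {} then Some (nm (SOME y. y \<in> nset X Bs r)) else None)" for r
  have realG: "realizes (PC X Bs rp \<mu>' \<delta>) G" if hyp: "\<And>r. measure \<mu> (nset X Bs r) > \<delta> \<Longrightarrow>
      \<exists>y\<in>nset X Bs r. G r = Some (nm y)" for G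
    unfolding realizes_def PC_def
  proof (simp, intro allI impI, elim conjE)
    fix p x assume x: "neg_closed_rep X Bs p x" "\<delta> < measure \<mu>' x"
    then have xe: "x = nset X Bs p" by (simp add: nset_rep)
    then have "measure \<mu> (nset X Bs p) > \<delta>" using x(2) mu' nset_m by simp
    then obtain y where "y \<in> nset X Bs p" "G p = Some (nm y)" using hyp by blast
    then show "\<exists>q. G p = Some q \<and> (\<exists>y. rp q y \<and> y \<in> x)"
      using nm nsetX xe by blast
  qed
  have G0r: "\<exists>y\<in>nset X Bs r. G0 r = Some (nm y)" if "measure \<mu> (nset X Bs r) > \<delta>" for r
  proof -
    have "nset X Bs r \<noteq> {}" using that eps by auto
    then have "(SOME y. y \<in> nset X Bs r) \<in> nset X Bs r" by (simp add: some_in_eq)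
    then show ?thesis unfolding G0_def by auto
  qed
  have F0gen: "\<exists>r. K p = Some r \<and> measure \<mu> (nset X Bs r) > \<delta> \<and>
         (\<forall>y\<in>nset X Bs r. \<exists>q x. Hc p (nm y) = Some q \<and> rp q x \<and> x \<in> A)"
    if red: "\<And>G. realizes (PC X Bs rp \<mu>' \<delta>) G \<Longrightarrow>
         realizes (PC X Bs rp \<mu>' \<epsilon>) (\<lambda>p. Option.bind (K p) (\<lambda>r. Option.bind (G r) (Hc p)))"
      and pA: "neg_closed_rep X Bs p A" "measure \<mu> A > \<epsilon>" for K Hc p A
  proof -
    have Ae: "A = nset X Bs p" using pA(1) by (simp add: nset_rep)
    have dom: "rep_in (PC X Bs rp \<mu>' \<epsilon>) p A \<and> A \<in> pdom (PC X Bs rp \<mu>' \<epsilon>)"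
      using pA mu' nset_m Ae by (simp add: PC_def)
    have use: "\<exists>q x. Option.bind (K p) (\<lambda>r. Option.bind (G r) (Hc p)) = Some q \<and> rp q x \<and> x \<in> A"
      if "realizes (PC X Bs rp \<mu>' \<delta>) G" for G
      using red[OF that] dom unfolding realizes_def by (simp add: PC_def)
    have "realizes (PC X Bs rp \<mu>' \<delta>) G0" using G0r by (intro realG) blast
    from use[OF this] obtain r where r: "K p = Some r" by (cases "K p") auto
    have big: "measure \<mu> (nset X Bs r) > \<delta>"
    proof (rule ccontr)
      assume nb: "\<not> ?thesis"
      define G' where "G' r' = (if r' = r then None else G0 r')" for r'
      have "realizes (PC X Bs rp \<mu>' \<delta>) G'"
        using G0r nb by (intro realG) (auto simp: G'_def)
      from use[OF this] show False using r by (simp add: G'_def)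
    qed
    have "\<exists>q x. Hc p (nm y) = Some q \<and> rp q x \<and> x \<in> A" if y: "y \<in> nset X Bs r" for y
    proof -
      define G' where "G' r' = (if r' = r then Some (nm y) else G0 r')" for r'
      have "realizes (PC X Bs rp \<mu>' \<delta>) G'"
        using G0r y by (intro realG) (auto simp: G'_def)
      from use[OF this] show ?thesis using r by (simp add: G'_def)
    qed
    then show ?thesis using r big by blast
  qed
  have comp_e: "\<exists>e. (\<forall>p r. F p = Some r \<longrightarrow> (\<forall>n. \<exists>k. reval e [prefix_code p k, n] (r n))) \<and>
      (\<forall>p r k n m. F p = Some r \<longrightarrow> reval e [prefix_code p k, n] m \<longrightarrow> m = r n)"
    if "computable F" for F
    using that unfolding computable_def by blast
  show "\<not> weihrauch_le (PC X Bs rp \<mu>' \<epsilon>) (PC X Bs rp \<mu>' \<delta>)"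
  proof
    assume "weihrauch_le (PC X Bs rp \<mu>' \<epsilon>) (PC X Bs rp \<mu>' \<delta>)"
    then obtain H K where HK: "computable H" "computable K"
      "\<And>G. realizes (PC X Bs rp \<mu>' \<delta>) G \<Longrightarrow>
         realizes (PC X Bs rp \<mu>' \<epsilon>) (\<lambda>p. Option.bind (K p) (\<lambda>r. Option.bind (G r) (\<lambda>s. H (bpair p s))))"
      unfolding weihrauch_le_def by blast
    obtain eK where eK: "\<forall>p r. K p = Some r \<longrightarrow> (\<forall>n. \<exists>k. reval eK [prefix_code p k, n] (r n))"
      "\<forall>p r k n m. K p = Some r \<longrightarrow> reval eK [prefix_code p k, n] m \<longrightarrow> m = r n"
      using comp_e[OF HK(2)] by (elim exE conjE) (rule that; assumption)
    obtain eH where eH: "\<forall>p r. H p = Some r \<longrightarrow> (\<forall>n. \<exists>k. reval eH [prefix_code p k, n] (r n))"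
      "\<forall>p r k n m. H p = Some r \<longrightarrow> reval eH [prefix_code p k, n] m \<longrightarrow> m = r n"
      using comp_e[OF HK(1)] by (elim exE conjE) (rule that; assumption)
    show False
      apply (rule neg_core[where cc=bpair and K=K and H=H and eK=eK and eH=eH and X=X and Bs=Bs
            and \<mu>=\<mu> and nm=nm and rp=rp and \<epsilon>=\<epsilon> and \<delta>=\<delta>])
                   apply (rule prob)
                  apply (rule sp)
                 apply (rule Bm)
                apply (rule nmm)
               apply (erule bpair_pc1)
              apply (erule bpair_pc2)
          apply (rule allI, erule eK(1)[rule_format])
         apply (erule (1) eK(2)[rule_format])
        apply (rule allI, erule eH(1)[rule_format])
       apply (erule (1) eH(2)[rule_format])
      apply (rule F0gen[of K "\<lambda>p s. H (bpair p s)"])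
        apply (erule HK(3))
       apply assumption
      apply assumption
     apply (erule scheme)
    using eps by auto
  qed
  show "\<not> strong_weihrauch_le (PC X Bs rp \<mu>' \<epsilon>) (PC X Bs rp \<mu>' \<delta>)"
  proof
    assume "strong_weihrauch_le (PC X Bs rp \<mu>' \<epsilon>) (PC X Bs rp \<mu>' \<delta>)"
    then obtain H K where HK: "computable H" "computable K"
      "\<And>G. realizes (PC X Bs rp \<mu>' \<delta>) G \<Longrightarrow>
         realizes (PC X Bs rp \<mu>' \<epsilon>) (\<lambda>p. Option.bind (K p) (\<lambda>r. Option.bind (G r) H))"
      unfolding strong_weihrauch_le_def by blast
    obtain eK where eK: "\<forall>p r. K p = Some r \<longrightarrow> (\<forall>n. \<exists>k. reval eK [prefix_code p k, n] (r n))"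
      "\<forall>p r k n m. K p = Some r \<longrightarrow> reval eK [prefix_code p k, n] m \<longrightarrow> m = r n"
      using comp_e[OF HK(2)] by (elim exE conjE) (rule that; assumption)
    obtain eH where eH: "\<forall>p r. H p = Some r \<longrightarrow> (\<forall>n. \<exists>k. reval eH [prefix_code p k, n] (r n))"
      "\<forall>p r k n m. H p = Some r \<longrightarrow> reval eH [prefix_code p k, n] m \<longrightarrow> m = r n"
      using comp_e[OF HK(1)] by (elim exE conjE) (rule that; assumption)
    have c1: "prefix_code ((\<lambda>p s. s) p s) k = prefix_code ((\<lambda>p s. s) p' s) k" for p p' s k by simp
    have c2: "(\<forall>i<k. s i = s' i) \<Longrightarrow> prefix_code ((\<lambda>p s. s) p s) k = prefix_code ((\<lambda>p s. s) p s') k" for p s s' k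
      by (simp add: prefix_code_cong)
    show False
      apply (rule neg_core[where cc="\<lambda>p s. s" and K=K and H=H and eK=eK and eH=eH and X=X and Bs=Bs
            and \<mu>=\<mu> and nm=nm and rp=rp and \<epsilon>=\<epsilon> and \<delta>=\<delta>])
                   apply (rule prob)
                  apply (rule sp)
                 apply (rule Bm)
                apply (rule nmm)
               apply (rule c1)
              apply (erule c2)
          apply (rule allI, erule eK(1)[rule_format])
         apply (erule (1) eK(2)[rule_format])
        apply (rule allI, erule eH(1)[rule_format])
       apply (erule (1) eH(2)[rule_format])
      apply (rule F0gen[of K "\<lambda>p s. H s"])
        apply (erule HK(3))
       apply assumption
      apply assumption
     apply (erule scheme)
    using eps by auto
  qed
qed


lemma sets_prefix:
  fixes f :: "'x \<Rightarrow> nat \<Rightarrow> 'v"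
  assumes "\<And>i a. {y \<in> space \<mu>. f y i = a} \<in> sets \<mu>"
  shows "{y \<in> space \<mu>. \<forall>i<N. f y i = g i} \<in> sets \<mu>"
proof (induction N)
  case 0 then show ?case by simp
next
  case (Suc N)
  have "{y \<in> space \<mu>. \<forall>i<Suc N. f y i = g i} = {y \<in> space \<mu>. \<forall>i<N. f y i = g i} \<inter> {y \<in> space \<mu>. f y N = g N}"
    by (auto simp: less_Suc_eq)
  then show ?case using Suc assms by auto
qed

lemma nmm_helper:
  fixes f :: "'x \<Rightarrow> nat \<Rightarrow> nat"
  assumes A: "\<And>i a. {y \<in> space \<mu>. f y i = a} \<in> sets \<mu>"
  shows "{y \<in> space \<mu>. P (map (f y) [0..<M])} \<in> sets \<mu>"
proof -
  have "{y \<in> space \<mu>. P (map (f y) [0..<M])} = (\<Union>l\<in>{l. P l \<and> length l = M}. {y \<in> space \<mu>. \<forall>i<M. f y i = l ! i})"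
  proof safe
    fix y assume "y \<in> space \<mu>" "P (map (f y) [0..<M])"
    then show "y \<in> (\<Union>l\<in>{l. P l \<and> length l = M}. {y \<in> space \<mu>. \<forall>i<M. f y i = l ! i})"
      by (intro UN_I[of "map (f y) [0..<M]"]) auto
  next
    fix y l assume "P l" "M = length l" "y \<in> space \<mu>" "\<forall>i<length l. f y i = l ! i"
    moreover have "map (f y) [0..<length l] = l"
      using calculation by (intro nth_equalityI) auto
    ultimately show "P (map (f y) [0..<length l])" by simp
  qed
  also have "\<dots> \<in> sets \<mu>"
    by (intro sets.countable_UN'' sets_prefix A) auto
  finally show ?thesis .
qed

lemma cantor_prob: "prob_space cantor_measure"
  unfolding cantor_measure_def by (rule prob_space_PiM) (simp add: prob_space_measure_pmf)

lemma cantor_space: "space cantor_measure = UNIV"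
  by (auto simp: cantor_measure_def space_PiM PiE_def extensional_def)

lemma cantor_comp: "{y \<in> space cantor_measure. y i = b} \<in> sets cantor_measure"
proof -
  have "(\<lambda>y. y i) \<in> measurable cantor_measure (measure_pmf (bernoulli_pmf (1/2)))"
    unfolding cantor_measure_def by (rule measurable_component_singleton) simp
  from measurable_sets[OF this, of "{b}"] show ?thesis
    by (simp add: vimage_def Int_def conj_commute)
qed

lemma cantor_cyl_sets: "{x. \<forall>i<N. x i = g i} \<in> sets cantor_measure"
  using sets_prefix[of cantor_measure "\<lambda>y i. y i" N g] cantor_comp by (simp add: cantor_space)

lemma cantor_basic_sets: "cantor_basic k \<in> sets cantor_measure"
  unfolding cantor_basic_def by (rule cantor_cyl_sets)

lemma cantor_cyl_measure: "measure cantor_measure {x. \<forall>i<N. x i = w ! i} = (1/2) ^ N"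
proof -
  interpret bp: prob_space "measure_pmf (bernoulli_pmf (1/2))" by (rule prob_space_measure_pmf)
  interpret product_prob_space "\<lambda>_::nat. measure_pmf (bernoulli_pmf (1/2))" UNIV
    by unfold_locales
  have eq: "prod_emb UNIV (\<lambda>_::nat. measure_pmf (bernoulli_pmf (1/2))) {..<N} (PiE {..<N} (\<lambda>i. {w ! i}))
      = {x. \<forall>i<N. x i = w ! i}"
    by (auto simp: prod_emb_iff PiE_iff)
  have "emeasure cantor_measure {x. \<forall>i<N. x i = w ! i} = (\<Prod>i\<in>{..<N}. emeasure (measure_pmf (bernoulli_pmf (1/2))) {w ! i})"
    unfolding cantor_measure_def eq[symmetric] by (rule emeasure_PiM_emb) auto
  also have "\<dots> = (\<Prod>i\<in>{..<N}. ennreal (1/2))"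
  proof (rule prod.cong[OF refl])
    fix i show "emeasure (measure_pmf (bernoulli_pmf (1/2))) {w ! i} = ennreal (1/2)"
      by (cases "w ! i") (simp_all add: emeasure_pmf_single)
  qed
  also have "\<dots> = ennreal (1/2) ^ N" by simp
  also have "\<dots> = ennreal ((1/2) ^ N)" by (rule ennreal_power) simp
  finally show ?thesis by (simp add: measure_def)
qed

definition bcode :: "bool list \<Rightarrow> nat" where
  "bcode w = list_encode (map (\<lambda>b. if b then 1 else 0) w)"

lemma cantor_basic_bcode: "cantor_basic (bcode w) = {x. \<forall>i<length w. x i = w ! i}"
proof -
  have "cantor_word (bcode w) = w"
    unfolding cantor_word_def bcode_def by (induction w) auto
  then show ?thesis by (simp add: cantor_basic_def)
qed

definition cnm :: "(nat \<Rightarrow> bool) \<Rightarrow> baire" where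
  "cnm y = (\<lambda>i. if y i then 1 else 0)"

lemma cantor_nmm: "{y\<in>UNIV. P (map (cnm y) [0..<M])} \<in> sets cantor_measure"
proof -
  have A: "{y \<in> space cantor_measure. cnm y i = a} \<in> sets cantor_measure" for i a
  proof -
    have "{y \<in> space cantor_measure. cnm y i = a} =
      (if a = 1 then {y \<in> space cantor_measure. y i = True} else if a = 0 then {y \<in> space cantor_measure. y i = False} else {})"
      by (auto simp: cnm_def)
    then show ?thesis using cantor_comp[of i True] cantor_comp[of i False] by simp
  qed
  show ?thesis using nmm_helper[OF A, where P=P and M=M] by (simp add: cantor_space)
qed

lemma cantor_scheme:
  assumes eps: "0 \<le> \<epsilon>" "\<epsilon> < 1" and \<gamma>: "\<gamma> > 0"
  shows "\<exists>L k (C :: bool list set) cellOf R. finite C \<and> card C > 0 \<and> k \<le> card C \<and>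
       real k / real (card C) < \<epsilon> + \<gamma> \<and> (\<forall>l. cellOf l \<in> C) \<and>
       (\<forall>q x. cantor_rep q x \<longrightarrow> x \<in> \<Union>(cantor_basic ` set (R (cellOf (map q [0..<L]))))) \<and>
       (\<forall>W\<subseteq>C. card W + k \<le> card C \<longrightarrow> measure cantor_measure (UNIV - (\<Union>c\<in>W. \<Union>(cantor_basic ` set (R c)))) > \<epsilon>)"
proof -
  interpret prob_space cantor_measure by (rule cantor_prob)
  obtain N where N: "(1/2::real) ^ N < \<gamma>" using real_arch_pow_inv[OF \<gamma>, of "1/2"] by auto
  define C where "C = {w :: bool list. set w \<subseteq> UNIV \<and> length w = N}"
  have finC: "finite C" unfolding C_def by (rule finite_lists_length_eq) simp
  have "card C = card (UNIV :: bool set) ^ N" unfolding C_def by (rule card_lists_length_eq) simp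
  then have cardC: "card C = 2 ^ N" by simp
  define k where "k = nat \<lfloor>\<epsilon> * 2 ^ N\<rfloor> + 1"
  have fl0: "\<lfloor>\<epsilon> * 2 ^ N\<rfloor> \<ge> 0" using eps by simp
  have rk: "real k = of_int \<lfloor>\<epsilon> * 2 ^ N\<rfloor> + 1" unfolding k_def using fl0 by simp
  have k1: "real k > \<epsilon> * 2 ^ N" unfolding rk by linarith
  have k2: "real k \<le> \<epsilon> * 2 ^ N + 1" unfolding rk by linarith
  have "\<epsilon> * 2 ^ N < 2 ^ N" using eps by simp
  then have "\<lfloor>\<epsilon> * 2 ^ N\<rfloor> < 2 ^ N" by (metis floor_less_iff of_int_numeral of_int_power)
  then have "nat \<lfloor>\<epsilon> * 2 ^ N\<rfloor> < 2 ^ N" using nat_less_iff[OF fl0, of "2^N"] by simp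
  then have kC: "k \<le> card C" unfolding cardC k_def by linarith
  have pos: "(2::real) ^ N > 0" by simp
  have kr: "real k / real (card C) < \<epsilon> + \<gamma>"
  proof -
    have "real k / real (card C) \<le> (\<epsilon> * 2 ^ N + 1) / 2 ^ N"
      unfolding cardC using k2 pos by (simp add: divide_right_mono)
    also have "\<dots> = \<epsilon> + (1/2) ^ N" using pos by (simp add: field_simps power_divide)
    finally show ?thesis using N by simp
  qed
  define cellOf where "cellOf l = map (\<lambda>i. l ! i = 1) [0..<N]" for l :: "nat list"
  define R where "R w = [bcode w]" for w
  have cellC: "cellOf l \<in> C" for l unfolding C_def cellOf_def by simp
  have cover: "x \<in> \<Union>(cantor_basic ` set (R (cellOf (map q [0..<N]))))" if "cantor_rep q x" for q x
    using that unfolding R_def cellOf_def cantor_rep_def by (simp add: cantor_basic_bcode)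
  have meas: "measure cantor_measure (UNIV - (\<Union>c\<in>W. \<Union>(cantor_basic ` set (R c)))) > \<epsilon>"
    if W: "W \<subseteq> C" "card W + k \<le> card C" for W
  proof -
    have finW: "finite W" using W(1) finC finite_subset by blast
    define U where "U = (\<Union>c\<in>W. \<Union>(cantor_basic ` set (R c)))"
    have U: "U = (\<Union>c\<in>W. cantor_basic (bcode c))" unfolding U_def R_def by simp
    have cm: "measure cantor_measure (cantor_basic (bcode c)) = (1/2) ^ N" if "c \<in> W" for c
      using that W(1) unfolding cantor_basic_bcode C_def by (auto simp: cantor_cyl_measure)
    have "measure cantor_measure U \<le> (\<Sum>c\<in>W. measure cantor_measure (cantor_basic (bcode c)))"
      unfolding U using finW cantor_basic_sets by (intro finite_measure_subadditive_finite) auto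
    also have "\<dots> = card W * (1/2) ^ N" using cm by simp
    finally have mU: "measure cantor_measure U \<le> card W * (1/2) ^ N" .
    have Us: "U \<in> sets cantor_measure" unfolding U using finW cantor_basic_sets by auto
    have "measure cantor_measure (UNIV - U) = 1 - measure cantor_measure U"
      using finite_measure_compl[OF Us] prob_space by (simp add: cantor_space)
    moreover have "real (card W) \<le> 2 ^ N - real k"
    proof -
      have "real (card W + k) \<le> real ((2::nat) ^ N)" using W(2) cardC by (simp only: of_nat_le_iff)
      then show ?thesis by simp
    qed
    ultimately have "measure cantor_measure (UNIV - U) \<ge> 1 - (2 ^ N - real k) * (1/2) ^ N"
    proof -
      assume a: "measure cantor_measure (UNIV - U) = 1 - measure cantor_measure U" "real (card W) \<le> 2 ^ N - real k"
      have "real (card W) * (1/2)^N \<le> (2 ^ N - real k) * (1/2)^N" by (rule mult_right_mono[OF a(2)]) simp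
      then show ?thesis using a(1) mU by linarith
    qed
    also have "1 - (2 ^ N - real k) * (1/2) ^ N = real k / 2 ^ N"
      using pos by (simp add: field_simps power_divide)
    finally have "measure cantor_measure (UNIV - U) \<ge> real k / 2 ^ N" .
    moreover have "real k / 2 ^ N > \<epsilon>" using k1 pos by (simp add: field_simps)
    ultimately show ?thesis unfolding U_def by simp
  qed
  show ?thesis
    apply (rule exI[of _ N], rule exI[of _ k], rule exI[of _ C], rule exI[of _ cellOf], rule exI[of _ R])
    using finC cardC kC kr cellC cover meas by auto
qed


abbreviation "UM \<equiv> restrict_space lborel {0..1::real}"

lemma unit_prob: "prob_space UM"
  by (rule prob_space_restrict_space) auto

lemma unit_space: "space UM = {0..1}"
  by (simp add: space_restrict_space)

lemma unit_sets: "A \<in> sets UM \<longleftrightarrow> A \<subseteq> {0..1} \<and> A \<in> sets borel"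
  by (subst sets_restrict_space_iff) auto

lemma unit_mu: "A \<in> sets UM \<Longrightarrow> measure lborel A = measure UM A"
  by (subst measure_restrict_space) (auto simp: unit_sets)

lemma unit_basic_sets: "unit_basic k \<in> sets UM"
proof -
  have "unit_basic k = {0..1} \<inter> {rat_num (fst (prod_decode k))<..<rat_num (snd (prod_decode k))}"
    unfolding unit_basic_def by auto
  then show ?thesis unfolding unit_sets by auto
qed

definition rcode :: "int \<Rightarrow> nat \<Rightarrow> nat" where
  "rcode z d = prod_encode (int_encode z, d - 1)"

lemma rat_num_rcode: "d > 0 \<Longrightarrow> rat_num (rcode z d) = real_of_int z / real d"
  by (simp add: rat_num_def rcode_def)

definition unm :: "real \<Rightarrow> baire" where
  "unm y = (\<lambda>i. rcode \<lfloor>y * 2 ^ i\<rfloor> (2 ^ i))"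

lemma unm_rep: "y \<in> {0..1} \<Longrightarrow> unit_rep (unm y) y"
  unfolding unit_rep_def
proof (intro conjI allI)
  fix n :: nat
  have p: "(2::real) ^ n > 0" by simp
  have r: "rat_num (unm y n) = real_of_int \<lfloor>y * 2 ^ n\<rfloor> / 2 ^ n"
    unfolding unm_def by (simp add: rat_num_rcode)
  have a: "real_of_int \<lfloor>y * 2 ^ n\<rfloor> \<le> y * 2 ^ n" "y * 2 ^ n < real_of_int \<lfloor>y * 2 ^ n\<rfloor> + 1"
    by linarith+
  have "\<bar>real_of_int \<lfloor>y * 2 ^ n\<rfloor> / 2 ^ n - y\<bar> = \<bar>real_of_int \<lfloor>y * 2 ^ n\<rfloor> - y * 2 ^ n\<bar> / 2 ^ n"
    using p by (simp add: field_simps abs_divide[symmetric])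
  also have "\<dots> \<le> 1 / 2 ^ n"
  proof (rule divide_right_mono)
    show "\<bar>real_of_int \<lfloor>y * 2 ^ n\<rfloor> - y * 2 ^ n\<bar> \<le> 1" using a by linarith
  qed (use p in simp)
  finally show "\<bar>rat_num (unm y n) - y\<bar> \<le> (1 / 2) ^ n" unfolding r by (simp add: power_divide)
qed auto

lemma unit_nmm: "{y\<in>{0..1}. P (map (unm y) [0..<M])} \<in> sets UM"
proof -
  have A: "{y \<in> space UM. unm y i = a} \<in> sets UM" for i a
  proof -
    have "(\<lambda>y::real. \<lfloor>y * 2 ^ i\<rfloor>) \<in> measurable borel (count_space UNIV)" by measurable
    then have m0: "(\<lambda>y::real. (\<lambda>z. rcode z (2 ^ i)) \<lfloor>y * 2 ^ i\<rfloor>) \<in> measurable borel (count_space UNIV)"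
      by (rule measurable_compose[OF _ measurable_count_space])
    have m: "(\<lambda>y. unm y i) \<in> measurable borel (count_space UNIV)"
      using m0 unfolding unm_def by simp
    have "(\<lambda>y. unm y i) -` {a} \<inter> space borel \<in> sets borel" by (rule measurable_sets[OF m]) simp
    then have "{y. unm y i = a} \<in> sets borel" by (simp add: vimage_def)
    moreover have "{0..1::real} \<in> sets borel" by simp
    ultimately have "{0..1} \<inter> {y. unm y i = a} \<in> sets borel" by (rule sets.Int[rotated])
    moreover have "{y \<in> space UM. unm y i = a} = {0..1} \<inter> {y. unm y i = a}" unfolding unit_space by auto
    ultimately show ?thesis unfolding unit_sets by auto
  qed
  show ?thesis using nmm_helper[OF A, where P=P and M=M] by (simp add: unit_space)
qed

lemma measure_lborel_Icc_le: "a \<le> b \<Longrightarrow> measure lborel {a..b::real} = b - a"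
  by (simp add: measure_def)


lemma unit_scheme:
  assumes eps: "0 \<le> \<epsilon>" "\<epsilon> < 1" and \<gamma>: "\<gamma> > 0"
  shows "\<exists>L k (C :: nat set) cellOf R. finite C \<and> card C > 0 \<and> k \<le> card C \<and>
       real k / real (card C) < \<epsilon> + \<gamma> \<and> (\<forall>l. cellOf l \<in> C) \<and>
       (\<forall>q x. unit_rep q x \<longrightarrow> x \<in> \<Union>(unit_basic ` set (R (cellOf (map q [0..<L]))))) \<and>
       (\<forall>W\<subseteq>C. card W + k \<le> card C \<longrightarrow> measure UM ({0..1} - (\<Union>c\<in>W. \<Union>(unit_basic ` set (R c)))) > \<epsilon>)"
proof -
  interpret prob_space UM by (rule unit_prob)
  obtain N where N: "(1/2::real) ^ N < \<gamma>" using real_arch_pow_inv[OF \<gamma>, of "1/2"] by auto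
  define n :: nat where "n = 2 ^ N"
  have n0: "n > 0" unfolding n_def by simp
  define nr where "nr = real n"
  have nr: "nr = 2 ^ N" "nr > 0" unfolding nr_def n_def by simp_all
  define C where "C = {..<n}"
  have finC: "finite C" and cardC: "card C = n" unfolding C_def by simp_all
  define k where "k = nat \<lfloor>\<epsilon> * nr\<rfloor> + 1"
  have fl0: "\<lfloor>\<epsilon> * nr\<rfloor> \<ge> 0" using eps nr by simp
  have rk: "real k = of_int \<lfloor>\<epsilon> * nr\<rfloor> + 1" unfolding k_def using fl0 by simp
  have k1: "real k > \<epsilon> * nr" unfolding rk by linarith
  have k2: "real k \<le> \<epsilon> * nr + 1" unfolding rk by linarith
  have "\<epsilon> * nr < nr" using eps nr by simp
  then have "\<lfloor>\<epsilon> * nr\<rfloor> < int n" unfolding nr_def by linarith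
  then have "nat \<lfloor>\<epsilon> * nr\<rfloor> < n" using nat_less_iff[OF fl0, of n] by simp
  then have kC: "k \<le> card C" unfolding cardC k_def by linarith
  have kr: "real k / real (card C) < \<epsilon> + \<gamma>"
  proof -
    have "real k / real (card C) \<le> (\<epsilon> * nr + 1) / nr"
      unfolding cardC nr_def[symmetric] using k2 nr by (simp add: divide_right_mono)
    also have "\<dots> = \<epsilon> + (1/2) ^ N" using nr by (simp add: field_simps power_divide)
    finally show ?thesis using N by simp
  qed
  define d where "d = real k / nr - \<epsilon>"
  have d0: "d > 0" unfolding d_def using k1 nr by (simp add: field_simps)
  have "d / (4 * nr) > 0" using d0 nr by simp
  then obtain L0 where L0: "(1/2::real) ^ L0 < d / (4 * nr)" using real_arch_pow_inv[of "d / (4 * nr)" "1/2"] by auto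
  define h where "h = (1/2::real) ^ L0"
  have h0: "h > 0" unfolding h_def by simp
  have hnr: "4 * nr * h < d" using L0 nr unfolding h_def by (simp add: field_simps)
  define D :: nat where "D = n * 2 ^ L0"
  have D0: "D > 0" unfolding D_def using n0 by simp
  define av where "av j = real j / nr - 2 * h" for j :: nat
  define bv where "bv j = (real j + 1) / nr + 2 * h" for j :: nat
  define za where "za j = int j * 2 ^ L0 - 2 * int n" for j :: nat
  define zb where "zb j = (int j + 1) * 2 ^ L0 + 2 * int n" for j :: nat
  have p2: "(2::real) ^ L0 > 0" by simp
  have hD: "h = 1 / 2 ^ L0" unfolding h_def by (simp add: power_divide)
  have av_eq: "real_of_int (za j) / real D = av j" for j
    unfolding za_def D_def av_def hD nr_def using n0 p2 by (simp add: field_simps)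
  have bv_eq: "real_of_int (zb j) / real D = bv j" for j
    unfolding zb_def D_def bv_def hD nr_def using n0 p2 by (simp add: field_simps)
  define code where "code j = prod_encode (rcode (za j) D, rcode (zb j) D)" for j
  have ub: "unit_basic (code j) = {x \<in> {0..1}. av j < x \<and> x < bv j}" for j
    unfolding unit_basic_def code_def using D0 by (simp add: rat_num_rcode av_eq bv_eq)
  define cellOf where "cellOf l = (if rat_num (l ! L0) < 0 then 0 else min (nat \<lfloor>rat_num (l ! L0) * nr\<rfloor>) (n - 1))" for l
  define R where "R j = [code j]" for j :: nat
  have cellC: "cellOf l \<in> C" for l unfolding C_def cellOf_def using n0 by auto
  have cover: "x \<in> \<Union>(unit_basic ` set (R (cellOf (map q [0..<Suc L0]))))" if qx: "unit_rep q x" for q x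
  proof -
    define r where "r = rat_num (q L0)"
    have x01: "x \<in> {0..1}" and rx: "\<bar>r - x\<bar> \<le> h" using qx unfolding unit_rep_def r_def h_def by auto
    have xr1: "x \<le> r + h" and xr2: "r - h \<le> x" using rx by (simp_all add: abs_le_iff)
    have inr: "1 / nr > 0" using nr by simp
    have cj: "cellOf (map q [0..<Suc L0]) = (if r < 0 then 0 else min (nat \<lfloor>r * nr\<rfloor>) (n - 1))"
      unfolding cellOf_def r_def by (simp del: upt_Suc)
    have "av (cellOf (map q [0..<Suc L0])) < x \<and> x < bv (cellOf (map q [0..<Suc L0]))"
    proof (cases "r < 0")
      case True
      have "x < 1 / nr + 2 * h" using xr1 True inr h0 by linarith
      moreover have "- 2 * h < x" using x01 h0 by simp
      ultimately show ?thesis unfolding cj av_def bv_def using True by simp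
    next
      case False
      define f where "f = \<lfloor>r * nr\<rfloor>"
      have f0: "f \<ge> 0" using False nr unfolding f_def by simp
      have f1: "of_int f \<le> r * nr" "r * nr < of_int f + 1" unfolding f_def by linarith+
      show ?thesis
      proof (cases "nat f \<le> n - 1")
        case True
        then have cj2: "cellOf (map q [0..<Suc L0]) = nat f" unfolding cj f_def using False by simp
        have rj: "real (nat f) = of_int f" using f0 by simp
        have a1: "real (nat f) / nr \<le> r" unfolding rj using f1 nr by (simp add: pos_divide_le_eq)
        have a2: "r < (real (nat f) + 1) / nr" unfolding rj using f1 nr by (simp add: pos_less_divide_eq)
        show ?thesis unfolding cj2 av_def bv_def using a1 a2 xr1 xr2 h0 by linarith
      next
        case nle: False
        then have cj2: "cellOf (map q [0..<Suc L0]) = n - 1" unfolding cj f_def using False by simp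
        have "f \<ge> int n" using nle n0 by linarith
        then have "r * nr \<ge> nr" using f1 nr_def by linarith
        then have r1: "r \<ge> 1" using nr by simp
        have e1: "real (n - 1) / nr = 1 - 1 / nr" using n0 nr by (simp add: nr_def of_nat_diff field_simps)
        have e2: "(real (n - 1) + 1) / nr = 1" using n0 nr by (simp add: nr_def of_nat_diff)
        have "1 - 1 / nr - 2 * h < x" using r1 xr2 h0 inr by linarith
        moreover have "x < 1 + 2 * h" using x01 h0 by simp
        ultimately show ?thesis unfolding cj2 av_def bv_def e1 e2 by simp
      qed
    qed
    then show ?thesis unfolding R_def using ub x01 by simp
  qed
  have meas: "measure UM ({0..1} - (\<Union>c\<in>W. \<Union>(unit_basic ` set (R c)))) > \<epsilon>"
    if W: "W \<subseteq> C" "card W + k \<le> card C" for W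
  proof -
    have finW: "finite W" using W(1) finC finite_subset by blast
    define U where "U = (\<Union>c\<in>W. \<Union>(unit_basic ` set (R c)))"
    have U: "U = (\<Union>c\<in>W. unit_basic (code c))" unfolding U_def R_def by simp
    have cm: "measure UM (unit_basic (code c)) \<le> 1 / nr + 4 * h" for c
    proof -
      have "measure UM (unit_basic (code c)) = measure lborel (unit_basic (code c))"
        using unit_mu[OF unit_basic_sets] by simp
      also have "\<dots> \<le> measure lborel {av c .. bv c}"
      proof (rule measure_mono_fmeasurable)
        show "unit_basic (code c) \<subseteq> {av c..bv c}" unfolding ub by auto
        show "unit_basic (code c) \<in> sets lborel" using unit_basic_sets[of "code c"] unfolding unit_sets by simp
        show "{av c..bv c} \<in> fmeasurable lborel" using fmeasurable_cbox[of "av c" "bv c"] by simp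
      qed
      also have "\<dots> = bv c - av c"
      proof (rule measure_lborel_Icc_le)
        have "real c / nr \<le> (real c + 1) / nr" by (rule divide_right_mono) (use nr in auto)
        then show "av c \<le> bv c" unfolding av_def bv_def using h0 by linarith
      qed
      also have "\<dots> = 1 / nr + 4 * h" unfolding av_def bv_def by (simp add: add_divide_distrib)
      finally show ?thesis .
    qed
    have "measure UM U \<le> (\<Sum>c\<in>W. measure UM (unit_basic (code c)))"
      unfolding U using finW unit_basic_sets by (intro finite_measure_subadditive_finite) auto
    also have "\<dots> \<le> (\<Sum>c\<in>W. 1 / nr + 4 * h)" using cm by (intro sum_mono) auto
    also have "\<dots> = real (card W) * (1 / nr + 4 * h)" by simp
    finally have mU: "measure UM U \<le> real (card W) * (1 / nr + 4 * h)" .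
    have Us: "U \<in> sets UM" unfolding U using finW unit_basic_sets by auto
    have c1: "measure UM ({0..1} - U) = 1 - measure UM U"
      using finite_measure_compl[OF Us] prob_space by (simp add: unit_space)
    have cw: "real (card W) \<le> real n - real k"
    proof -
      have "real (card W + k) \<le> real n" using W(2) cardC by (simp only: of_nat_le_iff)
      then show ?thesis by simp
    qed
    have "real (card W) * (1 / nr + 4 * h) \<le> (real n - real k) * (1 / nr + 4 * h)"
      by (rule mult_right_mono[OF cw]) (use h0 nr in simp)
    also have "\<dots> = 1 - real k / nr + (real n - real k) * 4 * h"
      using nr by (simp add: nr_def field_simps)
    also have "\<dots> \<le> 1 - real k / nr + nr * 4 * h"
      using h0 by (simp add: nr_def)
    finally have "measure UM ({0..1} - U) \<ge> real k / nr - 4 * nr * h" using c1 mU by linarith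
    then show ?thesis unfolding U_def[symmetric] using hnr d_def by linarith
  qed
  show ?thesis
    apply (rule exI[of _ "Suc L0"], rule exI[of _ k], rule exI[of _ C], rule exI[of _ cellOf], rule exI[of _ R])
    using finC cardC n0 kC kr cellC cover meas by auto
qed


lemma cnm_rep: "cantor_rep (cnm y) y"
  unfolding cantor_rep_def cnm_def by auto

lemma cantor_neg:
  assumes "0 \<le> \<epsilon>" "\<epsilon> < \<delta>" "\<delta> \<le> 1"
  shows "\<not> weihrauch_le (PC_cantor \<epsilon>) (PC_cantor \<delta>)" "\<not> strong_weihrauch_le (PC_cantor \<epsilon>) (PC_cantor \<delta>)"
proof -
  have sch: "\<exists>L k (C :: bool list set) cellOf R. finite C \<and> card C > 0 \<and> k \<le> card C \<and>
       real k / real (card C) < \<epsilon> + \<gamma> \<and> (\<forall>l. cellOf l \<in> C) \<and>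
       (\<forall>q x. cantor_rep q x \<longrightarrow> x \<in> \<Union>(cantor_basic ` set (R (cellOf (map q [0..<L]))))) \<and>
       (\<forall>W\<subseteq>C. card W + k \<le> card C \<longrightarrow> measure cantor_measure (UNIV - (\<Union>c\<in>W. \<Union>(cantor_basic ` set (R c)))) > \<epsilon>)"
    if "\<gamma> > 0" for \<gamma>
    using cantor_scheme[of \<epsilon> \<gamma>] assms that by simp
  note ng = neg_generic[where X=UNIV and Bs=cantor_basic and rp=cantor_rep and \<mu>=cantor_measure
      and \<mu>'=cantor_measure and nm=cnm and \<epsilon>=\<epsilon> and \<delta>=\<delta>,
      OF cantor_prob cantor_space cantor_basic_sets cantor_nmm cnm_rep refl sch assms]
  show "\<not> weihrauch_le (PC_cantor \<epsilon>) (PC_cantor \<delta>)" using ng(1) by (simp add: PC_cantor_def)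
  show "\<not> strong_weihrauch_le (PC_cantor \<epsilon>) (PC_cantor \<delta>)" using ng(2) by (simp add: PC_cantor_def)
qed

lemma unit_neg:
  assumes "0 \<le> \<epsilon>" "\<epsilon> < \<delta>" "\<delta> \<le> 1"
  shows "\<not> weihrauch_le (PC_unit \<epsilon>) (PC_unit \<delta>)" "\<not> strong_weihrauch_le (PC_unit \<epsilon>) (PC_unit \<delta>)"
proof -
  have sch: "\<exists>L k (C :: nat set) cellOf R. finite C \<and> card C > 0 \<and> k \<le> card C \<and>
       real k / real (card C) < \<epsilon> + \<gamma> \<and> (\<forall>l. cellOf l \<in> C) \<and>
       (\<forall>q x. unit_rep q x \<longrightarrow> x \<in> \<Union>(unit_basic ` set (R (cellOf (map q [0..<L]))))) \<and>
       (\<forall>W\<subseteq>C. card W + k \<le> card C \<longrightarrow> measure UM ({0..1} - (\<Union>c\<in>W. \<Union>(unit_basic ` set (R c)))) > \<epsilon>)"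
    if "\<gamma> > 0" for \<gamma>
    using unit_scheme[of \<epsilon> \<gamma>] assms that by simp
  note ng = neg_generic[where X="{0..1}" and Bs=unit_basic and rp=unit_rep and \<mu>=UM
      and \<mu>'=lborel and nm=unm and \<epsilon>=\<epsilon> and \<delta>=\<delta>,
      OF unit_prob unit_space unit_basic_sets unit_nmm unm_rep unit_mu sch assms]
  show "\<not> weihrauch_le (PC_unit \<epsilon>) (PC_unit \<delta>)" using ng(1) by (simp add: PC_unit_def)
  show "\<not> strong_weihrauch_le (PC_unit \<epsilon>) (PC_unit \<delta>)" using ng(2) by (simp add: PC_unit_def)
qed

theorem theorem10p1:
  fixes \<epsilon> \<delta> :: real
  assumes "\<epsilon> \<in> {0..1}" and "\<delta> \<in> {0..1}"
  shows "(weihrauch_le (PC_cantor \<epsilon>) (PC_cantor \<delta>) \<longleftrightarrow> strong_weihrauch_le (PC_cantor \<epsilon>) (PC_cantor \<delta>))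
       \<and> (strong_weihrauch_le (PC_cantor \<epsilon>) (PC_cantor \<delta>) \<longleftrightarrow> \<epsilon> \<ge> \<delta>)
       \<and> (weihrauch_le (PC_unit \<epsilon>) (PC_unit \<delta>) \<longleftrightarrow> strong_weihrauch_le (PC_unit \<epsilon>) (PC_unit \<delta>))
       \<and> (strong_weihrauch_le (PC_unit \<epsilon>) (PC_unit \<delta>) \<longleftrightarrow> \<epsilon> \<ge> \<delta>)"
proof (cases "\<delta> \<le> \<epsilon>")
  case True
  have a: "strong_weihrauch_le (PC_cantor \<epsilon>) (PC_cantor \<delta>)" "weihrauch_le (PC_cantor \<epsilon>) (PC_cantor \<delta>)"
    unfolding PC_cantor_def by (rule pos_dir[OF True])+
  have b: "strong_weihrauch_le (PC_unit \<epsilon>) (PC_unit \<delta>)" "weihrauch_le (PC_unit \<epsilon>) (PC_unit \<delta>)"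
    unfolding PC_unit_def by (rule pos_dir[OF True])+
  show ?thesis using a b True by simp
next
  case False
  then have "0 \<le> \<epsilon>" "\<epsilon> < \<delta>" "\<delta> \<le> 1" using assms by auto
  then show ?thesis using cantor_neg unit_neg False by simp
qed

end
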